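(* Let $n\equiv 3\pmod 4$ with $n>3$. Let $1\le r\le m$, let $M_r\in\mathfrak{C}_r$, and suppose $\det\tilde M_r>0$. Let $E_m^*\in\mathfrak{E}_m$ satisfy $\det E_m^*=\max\{\det E: E\in\mathfrak{E}_m\}$, and write $$E_m^*=\begin{bmatrix}M_r & B\\ B^T & A\end{bmatrix}$$ with $A=(a_{ij})$ of order $m-r$. Then for all $i\neq j$, $a_{ij}\in\{-1,3\}$.
   Context: Fix an integer $n\equiv 3\pmod 4$, $n>3$. For $m\ge1$, $\mathfrak{C}_m$ is the set of symmetric positive definite $m\times m$ integer matrices $C=(c_{ij})$ with $c_{ii}=n$ and $c_{ij}\equiv n\pmod 4$ for all $i,j$. Given a fixed $M_r\in\mathfrak{C}_r$, for $m\ge r$, $\mathfrak{E}_m$ is the set of $E_m\in\mathfrak{C}_m$ whose leading $r\times r$ submatrix is $M_r$. For a square matrix $C$ of order $m$, $\tilde C$ denotes the matrix obtained from $C$ by replacing its $(m,m)$ entry by $3$. *)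

theory Defs
  imports "Jordan_Normal_Form.Determinant" "HOL-Number_Theory.Cong"
begin

definition pos_def_real :: "real mat \<Rightarrow> bool" where
  "pos_def_real C \<longleftrightarrow> (\<forall>x \<in> carrier_vec (dim_row C). x \<noteq> 0\<^sub>v (dim_row C) \<longrightarrow> x \<bullet> (C *\<^sub>v x) > 0)"

definition frakC :: "int \<Rightarrow> nat \<Rightarrow> int mat set" where
  "frakC n m = {C. C \<in> carrier_mat m m \<and> C\<^sup>T = C
      \<and> pos_def_real (map_mat real_of_int C)
      \<and> (\<forall>i<m. C $$ (i,i) = n)
      \<and> (\<forall>i<m. \<forall>j<m. [C $$ (i,j) = n] (mod 4))}"

definition lead_sub :: "nat \<Rightarrow> 'a mat \<Rightarrow> 'a mat" where
  "lead_sub r C = mat r r (\<lambda>(i,j). C $$ (i,j))"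

definition frakE :: "int \<Rightarrow> int mat \<Rightarrow> nat \<Rightarrow> int mat set" where
  "frakE n M m = {E \<in> frakC n m. lead_sub (dim_row M) E = M}"

(* C with its (m,m) entry (last diagonal, 0-based index m-1) replaced by 3 *)
definition tilde :: "int mat \<Rightarrow> int mat" where
  "tilde C = mat (dim_row C) (dim_col C)
     (\<lambda>(i,j). if i = dim_row C - 1 \<and> j = dim_col C - 1 then 3 else C $$ (i,j))"

end

theory Submission
  imports Defs
begin


lemma schur_adj:
  fixes D :: "'a::idom mat"
  assumes D: "D \<in> carrier_mat k k" and B: "B \<in> carrier_mat k l"
    and C: "C \<in> carrier_mat l k" and G: "G \<in> carrier_mat l l"
  shows "det (four_block_mat D B C G) * det D ^ l
         = det D * det (det D \<cdot>\<^sub>m G - C * adj_mat D * B)"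
proof -
  define g where "g = det D"
  define A where "A = adj_mat D"
  have A: "A \<in> carrier_mat k k" and DA: "D * A = g \<cdot>\<^sub>m 1\<^sub>m k"
    using adj_mat[OF D] unfolding A_def g_def by auto
  define S where "S = g \<cdot>\<^sub>m G - C * A * B"
  have S: "S \<in> carrier_mat l l" unfolding S_def using A B C G by auto
  define L where "L = four_block_mat D (0\<^sub>m k l) C (1\<^sub>m l)"
  define U where "U = four_block_mat (1\<^sub>m k) (A * B) (0\<^sub>m l k) S"
  define R where "R = four_block_mat (1\<^sub>m k) (0\<^sub>m k l) (0\<^sub>m l k) (g \<cdot>\<^sub>m 1\<^sub>m l)"
  define E where "E = four_block_mat D B C G"
  have L: "L \<in> carrier_mat (k+l) (k+l)" unfolding L_def using D C by auto
  have U: "U \<in> carrier_mat (k+l) (k+l)" unfolding U_def using A B S by auto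
  have R: "R \<in> carrier_mat (k+l) (k+l)" unfolding R_def by auto
  have E: "E \<in> carrier_mat (k+l) (k+l)" unfolding E_def using D B C G by auto
  have detL: "det L = g" unfolding L_def g_def
    by (subst det_four_block_mat_upper_right_zero[OF D refl C], auto)
  have detU: "det U = det S" unfolding U_def
    by (subst det_four_block_mat_lower_left_zero[OF _ _ refl S], insert A B, auto)
  have detR: "det R = g ^ l" unfolding R_def
    by (subst det_four_block_mat_upper_right_zero[OF _ refl], auto simp: det_smult)
  have AB: "A * B \<in> carrier_mat k l" using A B by auto
  have LU: "L * U = four_block_mat D (g \<cdot>\<^sub>m B) C (g \<cdot>\<^sub>m G)"
  proof -
    have "L * U = four_block_mat (D * 1\<^sub>m k + 0\<^sub>m k l * 0\<^sub>m l k) (D * (A * B) + 0\<^sub>m k l * S)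
       (C * 1\<^sub>m k + 1\<^sub>m l * 0\<^sub>m l k) (C * (A * B) + 1\<^sub>m l * S)"
      unfolding L_def U_def
      by (rule mult_four_block_mat[OF D _ C _ _ AB _ S], auto)
    also have "D * 1\<^sub>m k + 0\<^sub>m k l * 0\<^sub>m l k = D" using D by auto
    also have "D * (A * B) + 0\<^sub>m k l * S = g \<cdot>\<^sub>m B"
    proof -
      have "D * (A * B) = (D * A) * B" using D A B by (simp add: assoc_mult_mat)
      also have "\<dots> = g \<cdot>\<^sub>m B" unfolding DA using B by auto
      finally show ?thesis using S B by auto
    qed
    also have "C * 1\<^sub>m k + 1\<^sub>m l * 0\<^sub>m l k = C" using C by auto
    also have "C * (A * B) + 1\<^sub>m l * S = g \<cdot>\<^sub>m G"
    proof -
      have "C * (A * B) = C * A * B" using C A B by (simp add: assoc_mult_mat)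
      moreover have "1\<^sub>m l * S = S" using S by auto
      moreover have "X + (g \<cdot>\<^sub>m G - X) = g \<cdot>\<^sub>m G" if "X \<in> carrier_mat l l" for X
        using that G by (intro eq_matI) auto
      ultimately show ?thesis unfolding S_def using C A B G
        by (metis mult_carrier_mat)
    qed
    finally show ?thesis .
  qed
  have ER: "E * R = four_block_mat D (g \<cdot>\<^sub>m B) C (g \<cdot>\<^sub>m G)"
  proof -
    have "E * R = four_block_mat (D * 1\<^sub>m k + B * 0\<^sub>m l k) (D * 0\<^sub>m k l + B * (g \<cdot>\<^sub>m 1\<^sub>m l))
       (C * 1\<^sub>m k + G * 0\<^sub>m l k) (C * 0\<^sub>m k l + G * (g \<cdot>\<^sub>m 1\<^sub>m l))"
      unfolding E_def R_def
      by (rule mult_four_block_mat[OF D B C G], auto)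
    also have "\<dots> = four_block_mat D (g \<cdot>\<^sub>m B) C (g \<cdot>\<^sub>m G)"
    proof (intro cong_four_block_mat)
      show "D * 1\<^sub>m k + B * 0\<^sub>m l k = D" using D B by simp
      show "D * 0\<^sub>m k l + B * (g \<cdot>\<^sub>m 1\<^sub>m l) = g \<cdot>\<^sub>m B" using D B
        by (simp add: mult_smult_distrib[OF B one_carrier_mat])
      show "C * 1\<^sub>m k + G * 0\<^sub>m l k = C" using C G by simp
      show "C * 0\<^sub>m k l + G * (g \<cdot>\<^sub>m 1\<^sub>m l) = g \<cdot>\<^sub>m G" using C G
        by (simp add: mult_smult_distrib[OF G one_carrier_mat])
    qed
    finally show ?thesis .
  qed
  have "det E * g ^ l = det (E * R)" using det_mult[OF E R] detR by simp
  also have "\<dots> = det (L * U)" unfolding ER LU ..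
  also have "\<dots> = g * det S" using det_mult[OF L U] detL detU by simp
  finally show ?thesis unfolding E_def g_def S_def A_def .
qed


lemma trip_index:
  assumes C: "C \<in> carrier_mat l k" and A: "A \<in> carrier_mat k k" and B: "B \<in> carrier_mat k l'"
    and i: "i < l" and j: "j < l'"
  shows "(C * A * B) $$ (i,j) = row C i \<bullet> (A *\<^sub>v col B j)"
proof -
  have "C * A * B = C * (A * B)" using C A B by (simp add: assoc_mult_mat)
  also have "\<dots> $$ (i,j) = row C i \<bullet> col (A * B) j" using C A B i j by simp
  also have "col (A * B) j = A *\<^sub>v col B j" using col_mult2[OF A B j] .
  finally show ?thesis .
qed

lemma det_2x2:
  assumes A: "(A :: 'a :: comm_ring_1 mat) \<in> carrier_mat 2 2"
  shows "det A = A $$ (0,0) * A $$ (1,1) - A $$ (0,1) * A $$ (1,0)"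
proof -
  have "det A = (\<Sum>j<2. A $$ (0,j) * cofactor A 0 j)"
    by (rule laplace_expansion_row[OF A], simp)
  also have "\<dots> = A $$ (0,0) * cofactor A 0 0 + A $$ (0,1) * cofactor A 0 1"
    by (simp add: numeral_2_eq_2)
  also have "cofactor A 0 0 = A $$ (1,1)"
    unfolding cofactor_def using A
    by (subst det_single[of _], auto simp: mat_delete_def)
  also have "cofactor A 0 1 = - A $$ (1,0)"
    unfolding cofactor_def using A
    by (subst det_single[of _], auto simp: mat_delete_def)
  finally show ?thesis by simp
qed

definition bord :: "'a::zero mat \<Rightarrow> 'a vec \<Rightarrow> 'a \<Rightarrow> 'a mat" where
  "bord P b d = four_block_mat P (mat (dim_row P) 1 (\<lambda>(i,j). b $ i))
      (mat 1 (dim_row P) (\<lambda>(i,j). b $ j)) (mat 1 1 (\<lambda>_. d))"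

lemma bord_carrier: "P \<in> carrier_mat k k \<Longrightarrow> bord P b d \<in> carrier_mat (Suc k) (Suc k)"
  unfolding bord_def by auto

lemma bord_dim[simp]: "dim_row (bord P b d) = Suc (dim_row P)"
   "dim_col (bord P b d) = Suc (dim_col P)"
  unfolding bord_def by auto

lemma bord_index:
  assumes "P \<in> carrier_mat k k" "i < Suc k" "j < Suc k"
  shows "bord P b d $$ (i,j) = (if i < k \<and> j < k then P $$ (i,j) else if i < k then b $ i
     else if j < k then b $ j else d)"
  using assms unfolding bord_def by auto

lemma lead_sub_carrier[simp]: "lead_sub k A \<in> carrier_mat k k"
  unfolding lead_sub_def by auto

lemma lead_sub_index[simp]: "i < k \<Longrightarrow> j < k \<Longrightarrow> lead_sub k A $$ (i,j) = A $$ (i,j)"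
  unfolding lead_sub_def by auto

lemma lead_sub_dim[simp]: "dim_row (lead_sub k A) = k" "dim_col (lead_sub k A) = k"
  unfolding lead_sub_def by auto

lemma bord_lead_sub:
  assumes E: "E \<in> carrier_mat (Suc k) (Suc k)" and sym: "\<And>i j. i < Suc k \<Longrightarrow> j < Suc k \<Longrightarrow> E $$ (i,j) = E $$ (j,i)"
  shows "E = bord (lead_sub k E) (vec k (\<lambda>i. E $$ (i,k))) (E $$ (k,k))"
proof (rule eq_matI)
  fix i j assume "i < dim_row (bord (lead_sub k E) (vec k (\<lambda>i. E $$ (i, k))) (E $$ (k, k)))"
    "j < dim_col (bord (lead_sub k E) (vec k (\<lambda>i. E $$ (i, k))) (E $$ (k, k)))"
  hence ij: "i < Suc k" "j < Suc k" by simp_all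
  show "E $$ (i, j) = bord (lead_sub k E) (vec k (\<lambda>i. E $$ (i, k))) (E $$ (k, k)) $$ (i, j)"
  proof (cases "i < k")
    case True
    thus ?thesis using ij by (cases "j < k", auto simp: bord_index[OF lead_sub_carrier] less_Suc_eq)
  next
    case False
    hence i: "i = k" using ij by simp
    show ?thesis
    proof (cases "j < k")
      case True
      thus ?thesis using i sym[of k j] ij by (auto simp: bord_index[OF lead_sub_carrier])
    next
      case False
      hence "j = k" using ij by simp
      thus ?thesis using i ij by (auto simp: bord_index[OF lead_sub_carrier])
    qed
  qed
qed (insert E, auto)

lemma bord_det:
  fixes P :: "'a::idom mat"
  assumes P: "P \<in> carrier_mat k k" and b: "b \<in> carrier_vec k" and g: "det P \<noteq> 0"
  shows "det (bord P b d) = det P * d - b \<bullet> (adj_mat P *\<^sub>v b)"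
proof -
  let ?B = "mat k 1 (\<lambda>(i,j). b $ i)" and ?C = "mat 1 k (\<lambda>(i,j). b $ j)" and ?G = "mat 1 1 (\<lambda>_. d)"
  have A: "adj_mat P \<in> carrier_mat k k" using adj_mat[OF P] by auto
  have "det (bord P b d) * det P ^ 1 = det P * det (det P \<cdot>\<^sub>m ?G - ?C * adj_mat P * ?B)"
    unfolding bord_def using P by (subst schur_adj[OF P], auto)
  also have "det (det P \<cdot>\<^sub>m ?G - ?C * adj_mat P * ?B) = (det P \<cdot>\<^sub>m ?G - ?C * adj_mat P * ?B) $$ (0,0)"
    by (rule det_single, insert P A, auto)
  also have "\<dots> = det P * d - (?C * adj_mat P * ?B) $$ (0,0)" using P A by auto
  also have "(?C * adj_mat P * ?B) $$ (0,0) = row ?C 0 \<bullet> (adj_mat P *\<^sub>v col ?B 0)"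
    by (rule trip_index[OF _ A], auto)
  also have "row ?C 0 = b" using b by (intro eq_vecI, auto)
  also have "col ?B 0 = b" using b by (intro eq_vecI, auto)
  finally show ?thesis using g by simp
qed

lemma adj_mat_sym:
  assumes D: "D \<in> carrier_mat k k" and sym: "\<And>i j. i < k \<Longrightarrow> j < k \<Longrightarrow> D $$ (i,j) = D $$ (j,i)"
    and i: "i < k" and j: "j < k"
  shows "adj_mat D $$ (i,j) = adj_mat D $$ (j,i)"
proof -
  have "mat_delete D j i = (mat_delete D i j)\<^sup>T"
    by (rule eq_matI, insert D sym, auto simp: mat_delete_def)
  moreover have "det ((mat_delete D i j)\<^sup>T) = det (mat_delete D i j)"
    by (rule det_transpose, rule mat_delete_carrier[OF D])
  ultimately have "det (mat_delete D j i) = det (mat_delete D i j)" by simp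
  thus ?thesis using D i j unfolding adj_mat_def cofactor_def by (simp add: add.commute)
qed

lemma adj_scalar_sym:
  assumes D: "D \<in> carrier_mat k k" and sym: "\<And>i j. i < k \<Longrightarrow> j < k \<Longrightarrow> D $$ (i,j) = D $$ (j,i)"
    and u: "u \<in> carrier_vec k" and w: "w \<in> carrier_vec k"
  shows "u \<bullet> (adj_mat D *\<^sub>v w) = w \<bullet> (adj_mat D *\<^sub>v u)"
proof -
  have A: "adj_mat D \<in> carrier_mat k k" using adj_mat[OF D] by auto
  have AT: "(adj_mat D)\<^sup>T = adj_mat D"
    by (rule eq_matI, insert A adj_mat_sym[OF D sym], auto)
  have "u \<bullet> (adj_mat D *\<^sub>v w) = ((adj_mat D)\<^sup>T *\<^sub>v u) \<bullet> w"
    using transpose_vec_mult_scalar[OF A w u] by simp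
  also have "\<dots> = w \<bullet> (adj_mat D *\<^sub>v u)" unfolding AT
    by (rule comm_scalar_prod[of _ k], insert A u w, auto)
  finally show ?thesis .
qed

lemma dj:
  fixes E :: "'a::idom mat"
  assumes E: "E \<in> carrier_mat (k+2) (k+2)"
  defines "D \<equiv> lead_sub k E"
  defines "g \<equiv> det D"
  defines "u \<equiv> vec k (\<lambda>i. E $$ (i,k))" and "w \<equiv> vec k (\<lambda>i. E $$ (i, Suc k))"
  defines "ur \<equiv> vec k (\<lambda>i. E $$ (k,i))" and "wr \<equiv> vec k (\<lambda>i. E $$ (Suc k, i))"
  shows "det E * g^2 = g * ((g * E $$ (k,k) - ur \<bullet> (adj_mat D *\<^sub>v u))
          * (g * E $$ (Suc k, Suc k) - wr \<bullet> (adj_mat D *\<^sub>v w))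
        - (g * E $$ (k, Suc k) - ur \<bullet> (adj_mat D *\<^sub>v w))
          * (g * E $$ (Suc k, k) - wr \<bullet> (adj_mat D *\<^sub>v u)))"
proof -
  define B where "B = mat k 2 (\<lambda>(i,j). E $$ (i, k+j))"
  define C where "C = mat 2 k (\<lambda>(i,j). E $$ (k+i, j))"
  define G where "G = mat 2 2 (\<lambda>(i,j). E $$ (k+i, k+j))"
  have D: "D \<in> carrier_mat k k" unfolding D_def by simp
  have A: "adj_mat D \<in> carrier_mat k k" using adj_mat[OF D] by auto
  have B: "B \<in> carrier_mat k 2" and C: "C \<in> carrier_mat 2 k" and G: "G \<in> carrier_mat 2 2"
    unfolding B_def C_def G_def by auto
  have EE: "E = four_block_mat D B C G"
    by (rule eq_matI, insert E, auto simp: D_def B_def C_def G_def)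
  define K where "K = g \<cdot>\<^sub>m G - C * adj_mat D * B"
  have K: "K \<in> carrier_mat 2 2" unfolding K_def using C A B G by auto
  have Kij: "K $$ (i,j) = g * G $$ (i,j) - row C i \<bullet> (adj_mat D *\<^sub>v col B j)" if "i < 2" "j < 2" for i j
    unfolding K_def using that C A B G trip_index[OF C A B that] by auto
  have r0: "row C 0 = ur" and r1: "row C 1 = wr" and c0: "col B 0 = u" and c1: "col B 1 = w"
    by (auto intro!: eq_vecI simp: C_def B_def ur_def wr_def u_def w_def)
  have "det E * g^2 = g * det K"
    unfolding EE g_def K_def by (rule schur_adj[OF D B C G])
  also have "det K = K $$ (0,0) * K $$ (1,1) - K $$ (0,1) * K $$ (1,0)" by (rule det_2x2[OF K])
  finally show ?thesis
    using Kij[of 0 0] Kij[of 1 1] Kij[of 0 1] Kij[of 1 0] r0 r1 c0 c1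
    by (simp add: G_def)
qed

definition cp :: "int \<Rightarrow> int mat \<Rightarrow> int mat" where
  "cp n P = bord P (vec (dim_row P) (\<lambda>i. if i = dim_row P - 1 then 3 else P $$ (i, dim_row P - 1))) n"

lemma mat_delete_last: "A \<in> carrier_mat (Suc k) (Suc k) \<Longrightarrow> mat_delete A k k = lead_sub k A"
  by (rule eq_matI, auto simp: mat_delete_def)

lemma cp_det:
  assumes P: "P \<in> carrier_mat (Suc k) (Suc k)"
    and sym: "\<And>i j. i < Suc k \<Longrightarrow> j < Suc k \<Longrightarrow> P $$ (i,j) = P $$ (j,i)"
    and diag: "P $$ (k,k) = n" and g: "det P \<noteq> 0"
  shows "det (cp n P) = (n-3) * (2 * det P - (n-3) * det (lead_sub k P))"
proof -
  define e where "e = (unit_vec (Suc k) k :: int vec)"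
  define c where "c = vec (Suc k) (\<lambda>i. if i = k then 3 else P $$ (i, k))"
  define A where "A = adj_mat P"
  have A: "A \<in> carrier_mat (Suc k) (Suc k)" and PA: "P * A = det P \<cdot>\<^sub>m 1\<^sub>m (Suc k)"
    and AP: "A * P = det P \<cdot>\<^sub>m 1\<^sub>m (Suc k)" using adj_mat[OF P] unfolding A_def by auto
  have e: "e \<in> carrier_vec (Suc k)" unfolding e_def by simp
  have Pe: "P *\<^sub>v e = col P k" unfolding e_def
    by (rule eq_vecI, insert P, auto simp: scalar_prod_right_unit)
  have c: "c \<in> carrier_vec (Suc k)" unfolding c_def by simp
  have ce: "c = P *\<^sub>v e - (n-3) \<cdot>\<^sub>v e" unfolding Pe
    by (rule eq_vecI, insert P diag, auto simp: c_def e_def)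
  have dP: "dim_row P = Suc k" using P by auto
  have sk: "Suc k - 1 = k" by simp
  have cpdef: "cp n P = bord P c n" unfolding cp_def c_def dP sk ..
  have "det (cp n P) = det P * n - c \<bullet> (A *\<^sub>v c)"
    unfolding cpdef A_def by (rule bord_det[OF P c g])
  moreover have "A *\<^sub>v c = det P \<cdot>\<^sub>v e - (n-3) \<cdot>\<^sub>v (A *\<^sub>v e)"
  proof -
    have "A *\<^sub>v c = A *\<^sub>v (P *\<^sub>v e) - A *\<^sub>v ((n-3) \<cdot>\<^sub>v e)"
      unfolding ce by (rule mult_minus_distrib_mat_vec[OF A], insert P e, auto)
    also have "A *\<^sub>v (P *\<^sub>v e) = (A * P) *\<^sub>v e" using A P e by (simp add: assoc_mult_mat_vec)
    also have "\<dots> = det P \<cdot>\<^sub>v e" unfolding AP using e by auto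
    also have "A *\<^sub>v ((n-3) \<cdot>\<^sub>v e) = (n-3) \<cdot>\<^sub>v (A *\<^sub>v e)"
      by (intro eq_vecI, insert A e, auto simp: scalar_prod_smult_distrib[of _ "Suc k"])
    finally show ?thesis .
  qed
  moreover have "c \<bullet> e = 3" unfolding e_def c_def by (simp add: scalar_prod_right_unit)
  moreover have "e \<bullet> (A *\<^sub>v e) = det (lead_sub k P)"
  proof -
    have "e \<bullet> (A *\<^sub>v e) = (A *\<^sub>v e) $ k" unfolding e_def
      by (rule scalar_prod_left_unit, insert A, auto)
    also have "\<dots> = A $$ (k,k)" using A unfolding e_def by (simp add: scalar_prod_right_unit)
    also have "\<dots> = det (lead_sub k P)" unfolding A_def adj_mat_def cofactor_def
      using P mat_delete_last[OF P] by simp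
    finally show ?thesis .
  qed
  moreover have "(P *\<^sub>v e) \<bullet> (A *\<^sub>v e) = det P"
  proof -
    have PT: "P\<^sup>T = P" by (rule eq_matI, insert P sym, auto)
    have "(P *\<^sub>v e) \<bullet> (A *\<^sub>v e) = (P\<^sup>T *\<^sub>v e) \<bullet> (A *\<^sub>v e)" unfolding PT ..
    also have "\<dots> = e \<bullet> (P *\<^sub>v (A *\<^sub>v e))" by (rule transpose_vec_mult_scalar[OF P], insert A e, auto)
    also have "P *\<^sub>v (A *\<^sub>v e) = (P * A) *\<^sub>v e" using A P e by (simp add: assoc_mult_mat_vec)
    also have "\<dots> = det P \<cdot>\<^sub>v e" unfolding PA using e by auto
    also have "e \<bullet> (det P \<cdot>\<^sub>v e) = det P" unfolding e_def by (simp add: scalar_prod_right_unit)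
    finally show ?thesis .
  qed
  ultimately show ?thesis
    using A e c P
    apply (simp add: scalar_prod_minus_distrib[of _ "Suc k"] scalar_prod_smult_distrib[of _ "Suc k"])
    apply (simp add: ce minus_scalar_prod_distrib[of _ "Suc k"] smult_scalar_prod_distrib[of _ "Suc k"])
    apply (simp add: algebra_simps)
    done
qed



lemma bord_mult_vec:
  fixes P :: "real mat"
  assumes P: "P \<in> carrier_mat k k" and b: "b \<in> carrier_vec k" and y: "y \<in> carrier_vec k"
  shows "bord P b d *\<^sub>v (y @\<^sub>v vec 1 (\<lambda>_. t)) = (P *\<^sub>v y + t \<cdot>\<^sub>v b) @\<^sub>v vec 1 (\<lambda>_. b \<bullet> y + d * t)"
proof -
  have "bord P b d *\<^sub>v (y @\<^sub>v vec 1 (\<lambda>_. t)) =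
    (P *\<^sub>v y + mat k 1 (\<lambda>(i,j). b $ i) *\<^sub>v vec 1 (\<lambda>_. t)) @\<^sub>v
    (mat 1 k (\<lambda>(i,j). b $ j) *\<^sub>v y + mat 1 1 (\<lambda>_. d) *\<^sub>v vec 1 (\<lambda>_. t))"
    unfolding bord_def using P by (subst four_block_mat_mult_vec[OF P _ _ _ y], auto)
  also have "mat k 1 (\<lambda>(i,j). b $ i) *\<^sub>v vec 1 (\<lambda>_. t) = t \<cdot>\<^sub>v b"
    using b by (intro eq_vecI, auto simp: scalar_prod_def mult.commute)
  also have "mat 1 k (\<lambda>(i,j). b $ j) *\<^sub>v y + mat 1 1 (\<lambda>_. d) *\<^sub>v vec 1 (\<lambda>_. t) = vec 1 (\<lambda>_. b \<bullet> y + d * t)"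
    using b y by (intro eq_vecI, auto simp: scalar_prod_def)
  finally show ?thesis .
qed

lemma key_identity:
  fixes P :: "real mat" and t :: real
  assumes P: "P \<in> carrier_mat k k" and PT: "P\<^sup>T = P" and b: "b \<in> carrier_vec k" and y: "y \<in> carrier_vec k"
  defines "g \<equiv> det P"
  defines "a \<equiv> adj_mat P *\<^sub>v b"
  defines "z \<equiv> g \<cdot>\<^sub>v y + t \<cdot>\<^sub>v a"
  shows "g^2 * ((y @\<^sub>v vec 1 (\<lambda>_. t)) \<bullet> (bord P b d *\<^sub>v (y @\<^sub>v vec 1 (\<lambda>_. t))))
     = z \<bullet> (P *\<^sub>v z) + g * t^2 * (g * d - b \<bullet> a)"
proof -
  have A: "adj_mat P \<in> carrier_mat k k" and PA: "P * adj_mat P = g \<cdot>\<^sub>m 1\<^sub>m k"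
    using adj_mat[OF P] unfolding g_def by auto
  have a: "a \<in> carrier_vec k" unfolding a_def using A b by auto
  have Pa: "P *\<^sub>v a = g \<cdot>\<^sub>v b"
  proof -
    have "P *\<^sub>v a = (P * adj_mat P) *\<^sub>v b" unfolding a_def using P A b by (simp add: assoc_mult_mat_vec)
    also have "\<dots> = g \<cdot>\<^sub>v b" unfolding PA using b by auto
    finally show ?thesis .
  qed
  have Py: "P *\<^sub>v y \<in> carrier_vec k" using P y by auto
  have aPy: "a \<bullet> (P *\<^sub>v y) = g * (b \<bullet> y)"
  proof -
    have "a \<bullet> (P *\<^sub>v y) = (P\<^sup>T *\<^sub>v a) \<bullet> y" using transpose_vec_mult_scalar[OF P y a] by simp
    also have "\<dots> = g * (b \<bullet> y)" unfolding PT Pa using b y by (simp add: smult_scalar_prod_distrib[of _ k])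
    finally show ?thesis .
  qed
  have yb: "y \<bullet> b = b \<bullet> y" using comm_scalar_prod[OF y b] .
  have ab: "a \<bullet> b = b \<bullet> a" using comm_scalar_prod[OF a b] .
  have Pz: "P *\<^sub>v z = g \<cdot>\<^sub>v (P *\<^sub>v y) + (t * g) \<cdot>\<^sub>v b"
  proof -
    have "P *\<^sub>v z = P *\<^sub>v (g \<cdot>\<^sub>v y) + P *\<^sub>v (t \<cdot>\<^sub>v a)" unfolding z_def
      by (rule mult_add_distrib_mat_vec[OF P], insert y a, auto)
    also have "P *\<^sub>v (g \<cdot>\<^sub>v y) = g \<cdot>\<^sub>v (P *\<^sub>v y)"
      by (intro eq_vecI, insert P y, auto simp: scalar_prod_smult_distrib[of _ k])
    also have "P *\<^sub>v (t \<cdot>\<^sub>v a) = t \<cdot>\<^sub>v (P *\<^sub>v a)"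
      by (intro eq_vecI, insert P a, auto simp: scalar_prod_smult_distrib[of _ k])
    also have "t \<cdot>\<^sub>v (P *\<^sub>v a) = (t * g) \<cdot>\<^sub>v b" unfolding Pa by (auto simp: smult_smult_assoc)
    finally show ?thesis .
  qed
  have zz: "z \<bullet> (P *\<^sub>v z) = g^2 * (y \<bullet> (P *\<^sub>v y)) + 2 * g^2 * t * (b \<bullet> y) + g * t^2 * (b \<bullet> a)"
    unfolding Pz unfolding z_def using y a b Py
    by (simp add: add_scalar_prod_distrib[of _ k] scalar_prod_add_distrib[of _ k]
        smult_scalar_prod_distrib[of _ k] scalar_prod_smult_distrib[of _ k] aPy yb ab power2_eq_square algebra_simps)
  have lhs: "(y @\<^sub>v vec 1 (\<lambda>_. t)) \<bullet> (bord P b d *\<^sub>v (y @\<^sub>v vec 1 (\<lambda>_. t)))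
      = y \<bullet> (P *\<^sub>v y) + 2 * t * (b \<bullet> y) + d * t^2"
  proof -
    have "(y @\<^sub>v vec 1 (\<lambda>_. t)) \<bullet> ((P *\<^sub>v y + t \<cdot>\<^sub>v b) @\<^sub>v vec 1 (\<lambda>_. b \<bullet> y + d * t))
       = y \<bullet> (P *\<^sub>v y + t \<cdot>\<^sub>v b) + vec 1 (\<lambda>_. t) \<bullet> vec 1 (\<lambda>_. b \<bullet> y + d * t)"
      by (rule scalar_prod_append, insert y b Py, auto)
    also have "y \<bullet> (P *\<^sub>v y + t \<cdot>\<^sub>v b) = y \<bullet> (P *\<^sub>v y) + t * (y \<bullet> b)"
      using y b Py by (simp add: scalar_prod_add_distrib[of _ k] scalar_prod_smult_distrib[of _ k])
    also have "vec 1 (\<lambda>_. t) \<bullet> vec 1 (\<lambda>_. b \<bullet> y + d * t) = t * (b \<bullet> y + d * t)"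
      by (simp add: scalar_prod_def)
    finally show ?thesis unfolding bord_mult_vec[OF P b y] yb by (simp add: algebra_simps power2_eq_square)
  qed
  show ?thesis unfolding lhs zz by (simp add: algebra_simps power2_eq_square)
qed


lemma split_last_vec:
  assumes x: "x \<in> carrier_vec (Suc k)"
  shows "x = vec_first x k @\<^sub>v vec 1 (\<lambda>_. x $ k)" "vec_first x k \<in> carrier_vec k"
proof -
  have "vec_first x k @\<^sub>v vec_last x 1 = x" using vec_first_last_append[of x k 1] x by simp
  moreover have "vec_last x 1 = vec 1 (\<lambda>_. x $ k)" using x
    by (intro eq_vecI, auto simp: vec_last_def)
  ultimately show "x = vec_first x k @\<^sub>v vec 1 (\<lambda>_. x $ k)" by simp
  show "vec_first x k \<in> carrier_vec k" unfolding vec_first_def by simp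
qed

lemma pd_pos: "pos_def_real P \<Longrightarrow> P \<in> carrier_mat k k \<Longrightarrow> z \<in> carrier_vec k \<Longrightarrow> z \<noteq> 0\<^sub>v k
   \<Longrightarrow> z \<bullet> (P *\<^sub>v z) > 0"
  unfolding pos_def_real_def by auto

lemma pd_nonneg: "pos_def_real P \<Longrightarrow> P \<in> carrier_mat k k \<Longrightarrow> z \<in> carrier_vec k
   \<Longrightarrow> z \<bullet> (P *\<^sub>v z) \<ge> 0"
  by (cases "z = 0\<^sub>v k", insert pd_pos[of P k z], auto)

lemma bord_pd_top:
  fixes P :: "real mat"
  assumes P: "P \<in> carrier_mat k k" and b: "b \<in> carrier_vec k" and pd: "pos_def_real (bord P b d)"
  shows "pos_def_real P"
  unfolding pos_def_real_def
proof (intro ballI impI)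
  fix y :: "real vec" assume "y \<in> carrier_vec (dim_row P)" and "y \<noteq> 0\<^sub>v (dim_row P)"
  moreover have dP: "dim_row P = k" using P by auto
  ultimately have y: "y \<in> carrier_vec k" and y0: "y \<noteq> 0\<^sub>v k" by simp_all
  define x where "x = y @\<^sub>v vec 1 (\<lambda>_. 0::real)"
  have x: "x \<in> carrier_vec (Suc k)" unfolding x_def using y by (intro carrier_vecI, simp)
  have x0: "x \<noteq> 0\<^sub>v (Suc k)"
  proof
    assume x0: "x = 0\<^sub>v (Suc k)"
    have "y $ i = 0" if i: "i < k" for i
    proof -
      have "x $ i = y $ i" unfolding x_def using y i by simp
      thus ?thesis using x0 i by simp
    qed
    hence "y = 0\<^sub>v k" using y by (intro eq_vecI, auto)
    with y0 show False by simp
  qed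
  have q: "x \<bullet> (bord P b d *\<^sub>v x) > 0" by (rule pd_pos[OF pd bord_carrier[OF P] x x0])
  have Py: "P *\<^sub>v y + 0 \<cdot>\<^sub>v b \<in> carrier_vec k" using P y b by simp
  have bx: "bord P b d *\<^sub>v x = (P *\<^sub>v y + 0 \<cdot>\<^sub>v b) @\<^sub>v vec 1 (\<lambda>_. b \<bullet> y + d * 0)"
    unfolding x_def by (rule bord_mult_vec[OF P b y])
  have e1: "x \<bullet> (bord P b d *\<^sub>v x) = y \<bullet> (P *\<^sub>v y + 0 \<cdot>\<^sub>v b) + vec 1 (\<lambda>_. 0::real) \<bullet> vec 1 (\<lambda>_. b \<bullet> y + d * 0)"
    unfolding bx unfolding x_def
    by (rule scalar_prod_append[OF y _ Py], simp_all)
  have e2: "y \<bullet> (P *\<^sub>v y + 0 \<cdot>\<^sub>v b) = y \<bullet> (P *\<^sub>v y)"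
  proof -
    have "P *\<^sub>v y + 0 \<cdot>\<^sub>v b = P *\<^sub>v y" using P y b by (intro eq_vecI, auto)
    thus ?thesis by simp
  qed
  have e3: "vec 1 (\<lambda>_. 0::real) \<bullet> vec 1 (\<lambda>_. b \<bullet> y + d * 0) = 0"
    by (simp add: scalar_prod_def)
  from q show "y \<bullet> (P *\<^sub>v y) > 0" unfolding e1 e2 e3 by simp
qed

lemma pd_bord:
  fixes P :: "real mat"
  assumes P: "P \<in> carrier_mat k k" and PT: "P\<^sup>T = P" and pd: "pos_def_real P" and g: "det P > 0"
    and b: "b \<in> carrier_vec k" and dB: "det (bord P b d) > 0"
  shows "pos_def_real (bord P b d)"
  unfolding pos_def_real_def
proof (intro ballI impI)
  fix x :: "real vec" assume "x \<in> carrier_vec (dim_row (bord P b d))" and x0: "x \<noteq> 0\<^sub>v (dim_row (bord P b d))"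
  moreover have dP: "dim_row (bord P b d) = Suc k" using P by auto
  ultimately have x: "x \<in> carrier_vec (Suc k)" and x0: "x \<noteq> 0\<^sub>v (Suc k)" by simp_all
  define y where "y = vec_first x k"
  define t where "t = x $ k"
  have xy: "x = y @\<^sub>v vec 1 (\<lambda>_. t)" and y: "y \<in> carrier_vec k"
    using split_last_vec[OF x] unfolding y_def t_def by auto
  define a where "a = adj_mat P *\<^sub>v b"
  define z where "z = det P \<cdot>\<^sub>v y + t \<cdot>\<^sub>v a"
  have a: "a \<in> carrier_vec k" using adj_mat[OF P] b unfolding a_def by auto
  have z: "z \<in> carrier_vec k" unfolding z_def using y a by auto
  have key: "(det P)^2 * (x \<bullet> (bord P b d *\<^sub>v x)) = z \<bullet> (P *\<^sub>v z) + det P * t^2 * det (bord P b d)"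
    unfolding xy z_def a_def using key_identity[OF P PT b y, of t d] bord_det[OF P b] g by simp
  have "z \<bullet> (P *\<^sub>v z) + det P * t^2 * det (bord P b d) > 0"
  proof (cases "t = 0")
    case True
    have "y \<noteq> 0\<^sub>v k"
    proof
      assume "y = 0\<^sub>v k"
      hence "x = 0\<^sub>v (Suc k)" unfolding xy True by (intro eq_vecI, auto)
      with x0 show False by simp
    qed
    have "\<exists>i<k. y $ i \<noteq> 0"
    proof (rule ccontr)
      assume "\<not> (\<exists>i<k. y $ i \<noteq> 0)"
      hence "y = 0\<^sub>v k" using y by (intro eq_vecI, auto)
      with \<open>y \<noteq> 0\<^sub>v k\<close> show False by simp
    qed
    then obtain i where i: "i < k" "y $ i \<noteq> 0" by auto
    have "z $ i \<noteq> 0" unfolding z_def using True i g y a by auto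
    hence "z \<noteq> 0\<^sub>v k" using i by auto
    hence "z \<bullet> (P *\<^sub>v z) > 0" by (rule pd_pos[OF pd P z])
    thus ?thesis using True by simp
  next
    case False
    have "det P * t^2 * det (bord P b d) > 0" using False g dB by simp
    moreover have "z \<bullet> (P *\<^sub>v z) \<ge> 0" by (rule pd_nonneg[OF pd P z])
    ultimately show ?thesis by simp
  qed
  hence "(det P)^2 * (x \<bullet> (bord P b d *\<^sub>v x)) > 0" using key by simp
  thus "x \<bullet> (bord P b d *\<^sub>v x) > 0" using g by (simp add: zero_less_mult_iff)
qed

lemma pd_det_pos:
  fixes E :: "real mat"
  assumes "E \<in> carrier_mat s s" and "E\<^sup>T = E" and "pos_def_real E"
  shows "det E > 0"
  using assms
proof (induction s arbitrary: E)
  case 0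
  thus ?case by simp
next
  case (Suc k E)
  have E: "E \<in> carrier_mat (Suc k) (Suc k)" by fact
  have sym: "E $$ (i,j) = E $$ (j,i)" if "i < Suc k" "j < Suc k" for i j
    using Suc.prems(2) E that by (metis carrier_matD index_transpose_mat(1))
  define P where "P = lead_sub k E"
  define b where "b = vec k (\<lambda>i. E $$ (i,k))"
  define d where "d = E $$ (k,k)"
  have EB: "E = bord P b d" unfolding P_def b_def d_def by (rule bord_lead_sub[OF E sym])
  have P: "P \<in> carrier_mat k k" unfolding P_def by simp
  have PT: "P\<^sup>T = P" unfolding P_def by (rule eq_matI, insert sym, auto)
  have b: "b \<in> carrier_vec k" unfolding b_def by simp
  have Ppd: "pos_def_real P" by (rule bord_pd_top[OF P b], insert Suc.prems(3) EB, simp)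
  have g: "det P > 0" by (rule Suc.IH[OF P PT Ppd])
  have b: "b \<in> carrier_vec k" unfolding b_def by simp
  define a where "a = adj_mat P *\<^sub>v b"
  have a: "a \<in> carrier_vec k" using adj_mat[OF P] b unfolding a_def by auto
  define y where "y = (- 1 / det P) \<cdot>\<^sub>v a"
  have y: "y \<in> carrier_vec k" unfolding y_def using a by simp
  have z: "det P \<cdot>\<^sub>v y + 1 \<cdot>\<^sub>v a = 0\<^sub>v k" unfolding y_def using a g by (intro eq_vecI, auto)
  define x where "x = y @\<^sub>v vec 1 (\<lambda>_. 1::real)"
  have x: "x \<in> carrier_vec (Suc k)" unfolding x_def using y by (intro carrier_vecI, simp)
  have x0: "x \<noteq> 0\<^sub>v (Suc k)"
  proof
    assume "x = 0\<^sub>v (Suc k)"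
    hence "x $ k = 0" by simp
    moreover have "x $ k = 1" unfolding x_def using y by simp
    ultimately show False by simp
  qed
  have kid: "(det P)^2 * (x \<bullet> (bord P b d *\<^sub>v x))
     = (det P \<cdot>\<^sub>v y + 1 \<cdot>\<^sub>v a) \<bullet> (P *\<^sub>v (det P \<cdot>\<^sub>v y + 1 \<cdot>\<^sub>v a)) + det P * 1^2 * (det P * d - b \<bullet> a)"
    unfolding x_def a_def by (rule key_identity[OF P PT b y])
  have zz: "(det P \<cdot>\<^sub>v y + 1 \<cdot>\<^sub>v a) \<bullet> (P *\<^sub>v (det P \<cdot>\<^sub>v y + 1 \<cdot>\<^sub>v a)) = 0"
    unfolding z using P by simp
  have bd: "det P * d - b \<bullet> a = det E" unfolding EB a_def using bord_det[OF P b] g by simp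
  have "(det P)^2 * (x \<bullet> (bord P b d *\<^sub>v x)) = det P * det E" using kid zz bd by simp
  moreover have "x \<bullet> (E *\<^sub>v x) > 0" by (rule pd_pos[OF Suc.prems(3) E x x0])
  ultimately have "det P * det E > 0" using EB g
    by (metis mult_pos_pos zero_less_power)
  thus ?case using g by (simp add: zero_less_mult_iff)
qed



lemma lead_sub_lead_sub: "k \<le> l \<Longrightarrow> lead_sub k (lead_sub l A) = lead_sub k A"
  by (rule eq_matI, auto)

lemma lead_sub_self: "A \<in> carrier_mat k k \<Longrightarrow> lead_sub k A = A"
  by (rule eq_matI, auto)

lemma transpose_sym: "E \<in> carrier_mat s s \<Longrightarrow> E\<^sup>T = E \<Longrightarrow> i < s \<Longrightarrow> j < s \<Longrightarrow> E $$ (i,j) = E $$ (j,i)"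
  by (metis carrier_matD index_transpose_mat(1))

lemma sym_transpose: "E \<in> carrier_mat s s \<Longrightarrow> (\<And>i j. i < s \<Longrightarrow> j < s \<Longrightarrow> E $$ (i,j) = E $$ (j,i)) \<Longrightarrow> E\<^sup>T = E"
  by (rule eq_matI, auto)

lemma lead_sub_pd_real:
  fixes E :: "real mat"
  assumes "E \<in> carrier_mat s s" "E\<^sup>T = E" "pos_def_real E" "k \<le> s"
  shows "pos_def_real (lead_sub k E)"
  using assms
proof (induction s arbitrary: E)
  case 0
  hence "lead_sub k E = E" using lead_sub_self[of E 0] by simp
  thus ?case using 0 by simp
next
  case (Suc s E)
  have E: "E \<in> carrier_mat (Suc s) (Suc s)" by fact
  show ?case
  proof (cases "k = Suc s")
    case True
    thus ?thesis using lead_sub_self[OF E] Suc.prems by simp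
  next
    case False
    hence ks: "k \<le> s" using Suc.prems by simp
    have sym: "E $$ (i,j) = E $$ (j,i)" if "i < Suc s" "j < Suc s" for i j
      using transpose_sym[OF E Suc.prems(2) that] .
    have EB: "E = bord (lead_sub s E) (vec s (\<lambda>i. E $$ (i,s))) (E $$ (s,s))"
      by (rule bord_lead_sub[OF E sym])
    have "pos_def_real (bord (lead_sub s E) (vec s (\<lambda>i. E $$ (i,s))) (E $$ (s,s)))"
      using Suc.prems(3) EB by simp
    hence pd1: "pos_def_real (lead_sub s E)"
      by (rule bord_pd_top[OF lead_sub_carrier, rotated], simp)
    have T1: "(lead_sub s E)\<^sup>T = lead_sub s E"
      by (rule sym_transpose[OF lead_sub_carrier], insert sym, auto)
    have "pos_def_real (lead_sub k (lead_sub s E))"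
      by (rule Suc.IH[OF lead_sub_carrier T1 pd1 ks])
    thus ?thesis using lead_sub_lead_sub[OF ks, of E] by simp
  qed
qed

abbreviation rmat :: "int mat \<Rightarrow> real mat" where "rmat E \<equiv> map_mat real_of_int E"

lemma rmat_lead_sub: "E \<in> carrier_mat s s \<Longrightarrow> k \<le> s \<Longrightarrow> rmat (lead_sub k E) = lead_sub k (rmat E)"
  by (rule eq_matI, auto)

lemma rmat_transpose: "(rmat E)\<^sup>T = rmat (E\<^sup>T)"
  by (rule eq_matI, auto)

lemma rmat_det: "det (rmat E) = real_of_int (det E)"
  by (rule of_int_hom.hom_det)

lemma rmat_bord: "P \<in> carrier_mat k k \<Longrightarrow> b \<in> carrier_vec k \<Longrightarrow> rmat (bord P b d) = bord (rmat P) (map_vec real_of_int b) (real_of_int d)"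
  by (rule eq_matI, auto simp: bord_def)

lemma pd_det_pos_int:
  assumes "E \<in> carrier_mat s s" "E\<^sup>T = E" "pos_def_real (rmat E)"
  shows "det E > 0"
proof -
  have "det (rmat E) > 0"
    by (rule pd_det_pos[of _ s], insert assms, auto simp: rmat_transpose)
  thus ?thesis unfolding rmat_det by simp
qed

lemma lead_sub_pd_int:
  assumes "E \<in> carrier_mat s s" "E\<^sup>T = E" "pos_def_real (rmat E)" "k \<le> s"
  shows "pos_def_real (rmat (lead_sub k E))"
  unfolding rmat_lead_sub[OF assms(1,4)]
  by (rule lead_sub_pd_real[of _ s], insert assms, auto simp: rmat_transpose)

lemma pd_bord_int:
  fixes P :: "int mat"
  assumes P: "P \<in> carrier_mat k k" and PT: "P\<^sup>T = P" and pd: "pos_def_real (rmat P)"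
    and b: "b \<in> carrier_vec k" and dB: "det (bord P b d) > 0"
  shows "pos_def_real (rmat (bord P b d))"
proof -
  have g: "det P > 0" by (rule pd_det_pos_int[OF P PT pd])
  have e: "rmat (bord P b d) = bord (rmat P) (map_vec real_of_int b) (real_of_int d)"
    by (rule rmat_bord[OF P b])
  have "det (rmat (bord P b d)) > 0" unfolding rmat_det using dB by simp
  hence dB': "det (bord (rmat P) (map_vec real_of_int b) (real_of_int d)) > 0" unfolding e .
  have g': "det (rmat P) > 0" unfolding rmat_det using g by simp
  have PT': "(rmat P)\<^sup>T = rmat P" unfolding rmat_transpose PT ..
  show ?thesis unfolding e
    by (rule pd_bord[OF _ PT' pd g' _ dB'], insert P b, auto)
qed



lemma frakE_iff: "E \<in> frakE n M s \<longleftrightarrow> E \<in> carrier_mat s s \<and> E\<^sup>T = E \<and> pos_def_real (rmat E)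
   \<and> (\<forall>i<s. E $$ (i,i) = n) \<and> (\<forall>i<s. \<forall>j<s. [E $$ (i,j) = n] (mod 4)) \<and> lead_sub (dim_row M) E = M"
  unfolding frakE_def frakC_def by auto

lemma frakE_lead:
  assumes E: "E \<in> frakE n M s" and rk: "dim_row M \<le> k" and ks: "k \<le> s"
  shows "lead_sub k E \<in> frakE n M k"
proof -
  from E[unfolded frakE_iff] have C: "E \<in> carrier_mat s s" and T: "E\<^sup>T = E" and pd: "pos_def_real (rmat E)"
    and dg: "\<forall>i<s. E $$ (i,i) = n" and cg: "\<forall>i<s. \<forall>j<s. [E $$ (i,j) = n] (mod 4)"
    and L: "lead_sub (dim_row M) E = M" by auto
  have "(lead_sub k E)\<^sup>T = lead_sub k E"
    by (rule sym_transpose[OF lead_sub_carrier], insert transpose_sym[OF C T] ks, auto)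
  moreover have "pos_def_real (rmat (lead_sub k E))" by (rule lead_sub_pd_int[OF C T pd ks])
  moreover have "lead_sub (dim_row M) (lead_sub k E) = M" using lead_sub_lead_sub[OF rk, of E] L by simp
  ultimately show ?thesis unfolding frakE_iff using dg cg ks by auto
qed

lemma cp_frakE:
  assumes H: "H \<in> frakE n M (Suc k)" and rk: "dim_row M \<le> Suc k" and n3: "[n = 3] (mod 4)"
    and pos: "det (cp n H) > 0"
  shows "cp n H \<in> frakE n M (Suc (Suc k))" "lead_sub (Suc k) (cp n H) = H"
proof -
  from H[unfolded frakE_iff] have C: "H \<in> carrier_mat (Suc k) (Suc k)" and T: "H\<^sup>T = H" and pd: "pos_def_real (rmat H)"
    and dg: "\<forall>i<Suc k. H $$ (i,i) = n" and cg: "\<forall>i<Suc k. \<forall>j<Suc k. [H $$ (i,j) = n] (mod 4)"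
    and L: "lead_sub (dim_row M) H = M" by auto
  have sym: "H $$ (i,j) = H $$ (j,i)" if "i < Suc k" "j < Suc k" for i j using transpose_sym[OF C T that] .
  define c where "c = vec (Suc k) (\<lambda>i. if i = k then 3 else H $$ (i, k))"
  have c: "c \<in> carrier_vec (Suc k)" unfolding c_def by simp
  have dH: "dim_row H = Suc k" using C by simp
  have sk: "Suc k - 1 = k" by simp
  have cpd: "cp n H = bord H c n" unfolding cp_def c_def dH sk ..
  have CC: "cp n H \<in> carrier_mat (Suc (Suc k)) (Suc (Suc k))" unfolding cpd by (rule bord_carrier[OF C])
  have idx: "cp n H $$ (i,j) = (if i < Suc k \<and> j < Suc k then H $$ (i,j) else if i < Suc k then c $ i
     else if j < Suc k then c $ j else n)" if "i < Suc (Suc k)" "j < Suc (Suc k)" for i j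
    unfolding cpd by (rule bord_index[OF C that])
  show L1: "lead_sub (Suc k) (cp n H) = H"
    by (rule eq_matI, insert C idx, auto)
  have TT: "(cp n H)\<^sup>T = cp n H"
    by (rule sym_transpose[OF CC], insert idx sym, auto)
  have PD: "pos_def_real (rmat (cp n H))" unfolding cpd
    by (rule pd_bord_int[OF C T pd c], insert pos cpd, simp)
  have 3: "[3 = n] (mod 4)" using n3 by (simp add: cong_sym)
  have DG: "\<forall>i<Suc (Suc k). cp n H $$ (i,i) = n" using idx dg by (auto simp: less_Suc_eq)
  have cc: "[c $ i = n] (mod 4)" if "i < Suc k" for i
    using cg that 3 unfolding c_def by auto
  have CG: "\<forall>i<Suc (Suc k). \<forall>j<Suc (Suc k). [cp n H $$ (i,j) = n] (mod 4)"
  proof (intro allI impI)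
    fix i j assume ij: "i < Suc (Suc k)" "j < Suc (Suc k)"
    show "[cp n H $$ (i,j) = n] (mod 4)" unfolding idx[OF ij]
      using cg cc ij by (auto simp: less_Suc_eq)
  qed
  have "lead_sub (dim_row M) (cp n H) = M"
    using lead_sub_lead_sub[OF rk, of "cp n H"] L1 L by simp
  thus "cp n H \<in> frakE n M (Suc (Suc k))" unfolding frakE_iff using CC TT PD DG CG by auto
qed

definition setpair :: "int mat \<Rightarrow> nat \<Rightarrow> nat \<Rightarrow> int \<Rightarrow> int mat" where
  "setpair E a b y = mat (dim_row E) (dim_col E) (\<lambda>(i,j). if (i = a \<and> j = b) \<or> (i = b \<and> j = a) then y else E $$ (i,j))"

lemma setpair_frakE:
  assumes E: "E \<in> frakE n M s" and ra: "dim_row M \<le> a" and rb: "dim_row M \<le> b" and ab: "a \<noteq> b" and as: "a < s"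
    and y: "[y = n] (mod 4)" and pd: "pos_def_real (rmat (setpair E a b y))"
  shows "setpair E a b y \<in> frakE n M s"
proof -
  from E[unfolded frakE_iff] have C: "E \<in> carrier_mat s s" and T: "E\<^sup>T = E"
    and dg: "\<forall>i<s. E $$ (i,i) = n" and cg: "\<forall>i<s. \<forall>j<s. [E $$ (i,j) = n] (mod 4)"
    and L: "lead_sub (dim_row M) E = M" by auto
  have sym: "E $$ (i,j) = E $$ (j,i)" if "i < s" "j < s" for i j using transpose_sym[OF C T that] .
  have CC: "setpair E a b y \<in> carrier_mat s s" unfolding setpair_def using C by auto
  have idx: "setpair E a b y $$ (i,j) = (if (i = a \<and> j = b) \<or> (i = b \<and> j = a) then y else E $$ (i,j))"
    if "i < s" "j < s" for i j unfolding setpair_def using C that by auto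
  have TT: "(setpair E a b y)\<^sup>T = setpair E a b y"
    by (rule sym_transpose[OF CC], insert idx sym, auto)
  have DG: "\<forall>i<s. setpair E a b y $$ (i,i) = n" using idx dg ab by auto
  have CG: "\<forall>i<s. \<forall>j<s. [setpair E a b y $$ (i,j) = n] (mod 4)" using idx cg y by auto
  have "lead_sub (dim_row M) (setpair E a b y) = lead_sub (dim_row M) E"
  proof (rule eq_matI)
    fix i j assume "i < dim_row (lead_sub (dim_row M) E)" "j < dim_col (lead_sub (dim_row M) E)"
    hence ij: "i < dim_row M" "j < dim_row M" by auto
    hence "i < s" "j < s" using ra as by auto
    thus "lead_sub (dim_row M) (setpair E a b y) $$ (i, j) = lead_sub (dim_row M) E $$ (i, j)"
      using idx ij ra rb by auto
  qed auto
  thus ?thesis unfolding frakE_iff using CC TT pd DG CG L by auto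
qed

definition permE :: "(nat \<Rightarrow> nat) \<Rightarrow> int mat \<Rightarrow> int mat" where
  "permE p E = mat (dim_row E) (dim_col E) (\<lambda>(i,j). E $$ (p i, p j))"

lemma qf_sum:
  fixes C :: "'a :: comm_ring_1 mat"
  assumes C: "C \<in> carrier_mat s s" and x: "x \<in> carrier_vec s"
  shows "x \<bullet> (C *\<^sub>v x) = (\<Sum>i\<in>{0..<s}. \<Sum>j\<in>{0..<s}. x $ i * C $$ (i,j) * x $ j)"
proof -
  have "x \<bullet> (C *\<^sub>v x) = (\<Sum>i\<in>{0..<s}. x $ i * (C *\<^sub>v x) $ i)"
    unfolding scalar_prod_def using C by simp
  also have "\<dots> = (\<Sum>i\<in>{0..<s}. x $ i * (\<Sum>j\<in>{0..<s}. C $$ (i,j) * x $ j))"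
    by (rule sum.cong, insert C x, auto simp: scalar_prod_def)
  also have "\<dots> = (\<Sum>i\<in>{0..<s}. \<Sum>j\<in>{0..<s}. x $ i * C $$ (i,j) * x $ j)"
    by (simp add: sum_distrib_left mult.assoc)
  finally show ?thesis .
qed

lemma permE_det:
  assumes E: "E \<in> carrier_mat s s" and p: "p permutes {0..<s}"
  shows "det (permE p E) = det E"
proof -
  define F where "F = mat s s (\<lambda>(i,j). E $$ (p i, j))"
  have F: "F \<in> carrier_mat s s" unfolding F_def by simp
  have dF: "det F = signof p * det E" unfolding F_def by (rule det_permute_rows[OF E p])
  define G where "G = mat s s (\<lambda>(i,j). F\<^sup>T $$ (p i, j))"
  have FT: "F\<^sup>T \<in> carrier_mat s s" using F by simp
  have dG: "det G = signof p * det F\<^sup>T" unfolding G_def by (rule det_permute_rows[OF FT p])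
  have pi: "p i < s" if "i < s" for i using permutes_in_image[OF p] that by auto
  have GT: "G\<^sup>T = permE p E"
    by (rule eq_matI, insert E pi, auto simp: G_def F_def permE_def)
  have "det (permE p E) = det G" unfolding GT[symmetric] by (rule det_transpose[of _ s], simp add: G_def)
  also have "\<dots> = signof p * signof p * det E" unfolding dG det_transpose[OF F] dF by simp
  also have "signof p * signof p = (1::int)" by simp
  finally show ?thesis by simp
qed

lemma permE_qf:
  fixes C :: "'a :: comm_ring_1 mat"
  assumes C: "C \<in> carrier_mat s s" and p: "p permutes {0..<s}" and x: "x \<in> carrier_vec s"
  defines "x' \<equiv> vec s (\<lambda>i. x $ (Hilbert_Choice.inv p i))"
  shows "x \<bullet> (mat s s (\<lambda>(i,j). C $$ (p i, p j)) *\<^sub>v x) = x' \<bullet> (C *\<^sub>v x')"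
proof -
  have pi: "p i < s" if "i < s" for i using permutes_in_image[OF p] that by auto
  have x'p: "x' $ (p i) = x $ i" if "i < s" for i
    unfolding x'_def using pi[OF that] permutes_inverses(2)[OF p] by simp
  have x': "x' \<in> carrier_vec s" unfolding x'_def by simp
  have "x \<bullet> (mat s s (\<lambda>(i,j). C $$ (p i, p j)) *\<^sub>v x)
     = (\<Sum>i\<in>{0..<s}. \<Sum>j\<in>{0..<s}. x $ i * C $$ (p i, p j) * x $ j)"
    by (subst qf_sum[of _ s], insert x, auto intro!: sum.cong)
  also have "\<dots> = (\<Sum>i\<in>{0..<s}. \<Sum>j\<in>{0..<s}. x' $ (p i) * C $$ (p i, p j) * x' $ (p j))"
    by (rule sum.cong[OF refl], rule sum.cong[OF refl], simp add: x'p)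
  also have "\<dots> = (\<Sum>i\<in>{0..<s}. \<Sum>j\<in>{0..<s}. x' $ (p i) * C $$ (p i, j) * x' $ j)"
    by (rule sum.cong[OF refl], subst sum.permute[OF p], simp add: o_def)
  also have "\<dots> = (\<Sum>i\<in>{0..<s}. \<Sum>j\<in>{0..<s}. x' $ i * C $$ (i, j) * x' $ j)"
    by (subst (2) sum.permute[OF p], simp add: o_def)
  also have "\<dots> = x' \<bullet> (C *\<^sub>v x')" by (rule qf_sum[OF C x', symmetric])
  finally show ?thesis .
qed

lemma permE_frakE:
  assumes E: "E \<in> frakE n M s" and p: "p permutes {0..<s}" and fix0: "\<forall>i<dim_row M. p i = i"
    and rs: "dim_row M \<le> s"
  shows "permE p E \<in> frakE n M s"
proof -
  from E[unfolded frakE_iff] have C: "E \<in> carrier_mat s s" and T: "E\<^sup>T = E" and pd: "pos_def_real (rmat E)"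
    and dg: "\<forall>i<s. E $$ (i,i) = n" and cg: "\<forall>i<s. \<forall>j<s. [E $$ (i,j) = n] (mod 4)"
    and L: "lead_sub (dim_row M) E = M" by auto
  have sym: "E $$ (i,j) = E $$ (j,i)" if "i < s" "j < s" for i j using transpose_sym[OF C T that] .
  have pi: "p i < s" if "i < s" for i using permutes_in_image[OF p] that by auto
  have CC: "permE p E \<in> carrier_mat s s" unfolding permE_def using C by auto
  have idx: "permE p E $$ (i,j) = E $$ (p i, p j)" if "i < s" "j < s" for i j
    unfolding permE_def using C that by auto
  have TT: "(permE p E)\<^sup>T = permE p E"
    by (rule sym_transpose[OF CC], insert idx sym pi, auto)
  have DG: "\<forall>i<s. permE p E $$ (i,i) = n" using idx dg pi by auto
  have CG: "\<forall>i<s. \<forall>j<s. [permE p E $$ (i,j) = n] (mod 4)" using idx cg pi by auto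
  have LL: "lead_sub (dim_row M) (permE p E) = M"
  proof -
    have "lead_sub (dim_row M) (permE p E) = lead_sub (dim_row M) E"
      by (rule eq_matI, insert idx fix0 rs, auto)
    thus ?thesis using L by simp
  qed
  have PD: "pos_def_real (rmat (permE p E))"
    unfolding pos_def_real_def
  proof (intro ballI impI)
    fix x :: "real vec" assume x1: "x \<in> carrier_vec (dim_row (rmat (permE p E)))"
      and x2: "x \<noteq> 0\<^sub>v (dim_row (rmat (permE p E)))"
    have dd: "dim_row (rmat (permE p E)) = s" using CC by simp
    have x: "x \<in> carrier_vec s" using x1 unfolding dd .
    have x0: "x \<noteq> 0\<^sub>v s" using x2 unfolding dd .
    define x' where "x' = vec s (\<lambda>i. x $ (Hilbert_Choice.inv p i))"
    have x': "x' \<in> carrier_vec s" unfolding x'_def by simp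
    have x'p: "x' $ (p i) = x $ i" if "i < s" for i
      unfolding x'_def using pi[OF that] permutes_inverses(2)[OF p] by simp
    have x'0: "x' \<noteq> 0\<^sub>v s"
    proof
      assume "x' = 0\<^sub>v s"
      hence "x $ i = 0" if "i < s" for i using x'p[OF that] pi[OF that] by simp
      hence "x = 0\<^sub>v s" using x by (intro eq_vecI, auto)
      with x0 show False by simp
    qed
    have RC: "rmat E \<in> carrier_mat s s" using C by simp
    have eqm: "rmat (permE p E) = mat s s (\<lambda>(i,j). rmat E $$ (p i, p j))"
      by (rule eq_matI, insert C CC idx pi, auto)
    have "x \<bullet> (rmat (permE p E) *\<^sub>v x) = x' \<bullet> (rmat E *\<^sub>v x')"
      unfolding eqm x'_def by (rule permE_qf[OF RC p x])
    also have "\<dots> > 0" using pd x' x'0 RC unfolding pos_def_real_def by simp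
    finally show "x \<bullet> (rmat (permE p E) *\<^sub>v x) > 0" .
  qed
  show ?thesis unfolding frakE_iff using CC TT PD DG CG LL by auto
qed



lemma frakE_carrier: "E \<in> frakE n M s \<Longrightarrow> E \<in> carrier_mat s s"
  unfolding frakE_iff by auto

lemma frakE_T: "E \<in> frakE n M s \<Longrightarrow> E\<^sup>T = E"
  unfolding frakE_iff by auto

lemma frakE_pd: "E \<in> frakE n M s \<Longrightarrow> pos_def_real (rmat E)"
  unfolding frakE_iff by auto

lemma frakE_sym: "E \<in> frakE n M s \<Longrightarrow> i < s \<Longrightarrow> j < s \<Longrightarrow> E $$ (i,j) = E $$ (j,i)"
  by (rule transpose_sym[OF frakE_carrier frakE_T])

lemma frakE_det_pos: "E \<in> frakE n M s \<Longrightarrow> det E > 0"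
  by (rule pd_det_pos_int[OF frakE_carrier frakE_T frakE_pd])

lemma frakE_diag: "E \<in> frakE n M s \<Longrightarrow> i < s \<Longrightarrow> E $$ (i,i) = n"
  unfolding frakE_iff by auto

lemma cp_step:
  assumes H: "H \<in> frakE n M (Suc k)" and rk: "dim_row M \<le> Suc k" and n3: "[n = 3] (mod 4)" and ng: "n > 3"
    and hp: "(n-3) * det (lead_sub k H) < det H"
  shows "cp n H \<in> frakE n M (Suc (Suc k))" "lead_sub (Suc k) (cp n H) = H" "(n-3) * det H < det (cp n H)"
proof -
  have C: "H \<in> carrier_mat (Suc k) (Suc k)" by (rule frakE_carrier[OF H])
  have dpos: "det H > 0" by (rule frakE_det_pos[OF H])
  have "det (cp n H) = (n-3) * (2 * det H - (n-3) * det (lead_sub k H))"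
    by (rule cp_det[OF C frakE_sym[OF H] frakE_diag[OF H]], insert dpos, auto)
  hence eq: "det (cp n H) - (n-3) * det H = (n-3) * (det H - (n-3) * det (lead_sub k H))"
    by (simp add: algebra_simps)
  have "(n-3) * (det H - (n-3) * det (lead_sub k H)) > 0" using ng hp by simp
  thus gt: "(n-3) * det H < det (cp n H)" using eq by simp
  have "(n-3) * det H > 0" using ng dpos by simp
  hence pos: "det (cp n H) > 0" using gt by simp
  show "cp n H \<in> frakE n M (Suc (Suc k))" "lead_sub (Suc k) (cp n H) = H"
    using cp_frakE[OF H rk n3 pos] by auto
qed

lemma tilde_rel:
  assumes M: "M \<in> frakC n (Suc k)"
  shows "det M - det (tilde M) = (n-3) * det (lead_sub k M)"
proof -
  have ME: "M \<in> frakE n M (Suc k)"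
    using M unfolding frakE_def by (auto simp: frakC_def lead_sub_self)
  have C: "M \<in> carrier_mat (Suc k) (Suc k)" by (rule frakE_carrier[OF ME])
  have sym: "M $$ (i,j) = M $$ (j,i)" if "i < Suc k" "j < Suc k" for i j by (rule frakE_sym[OF ME that])
  define P where "P = lead_sub k M"
  define u where "u = vec k (\<lambda>i. M $$ (i,k))"
  have P: "P \<in> carrier_mat k k" unfolding P_def by simp
  have u: "u \<in> carrier_vec k" unfolding u_def by simp
  have MB: "M = bord P u n" using bord_lead_sub[OF C sym] frakE_diag[OF ME, of k] unfolding P_def u_def by simp
  have TB: "tilde M = bord P u 3"
  proof (rule eq_matI)
    fix i j assume "i < dim_row (bord P u 3)" "j < dim_col (bord P u 3)"
    hence ij: "i < Suc k" "j < Suc k" using P by auto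
    have "M $$ (i,j) = bord P u n $$ (i,j)" using MB by simp
    thus "tilde M $$ (i,j) = bord P u 3 $$ (i,j)"
      unfolding tilde_def using C ij bord_index[OF P ij] by auto
  qed (insert C P, auto simp: tilde_def)
  have Pin: "P \<in> frakE n M k \<or> True" by simp
  have PT: "P\<^sup>T = P" unfolding P_def by (rule sym_transpose[OF lead_sub_carrier], insert sym, auto)
  have Ppd: "pos_def_real (rmat P)" unfolding P_def
    by (rule lead_sub_pd_int[OF C], insert ME, auto simp: frakE_iff)
  have g: "det P \<noteq> 0" using pd_det_pos_int[OF P PT Ppd] by simp
  show ?thesis
    unfolding P_def[symmetric] using bord_det[OF P u g, of n] bord_det[OF P u g, of 3] MB TB
    by (simp add: algebra_simps)
qed

lemma sq_less_iff: "(x::int)^2 < y^2 \<longleftrightarrow> \<bar>x\<bar> < \<bar>y\<bar>"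
  using abs_le_square_iff[of y x] by linarith

lemma arith1:
  fixes A B g n dE :: int
  assumes g: "g > 0" and n: "n > 3" and B: "B > 0"
    and fB: "(n-3)*B < dE" and cpA: "(n-3)*(2*A - (n-3)*g) \<le> dE"
    and dj: "dE * g = A*B - S" and S: "S \<ge> 0"
  shows "dE > (n-3)^2 * g"
proof (rule ccontr)
  assume "\<not> ?thesis"
  hence le: "dE \<le> (n-3)^2 * g" by simp
  have "(n-3)*(2*A - (n-3)*g) \<le> (n-3)*((n-3)*g)" using cpA le by (simp add: power2_eq_square algebra_simps)
  hence "2*A - (n-3)*g \<le> (n-3)*g" using n by (simp add: mult_le_cancel_left)
  hence A: "A \<le> (n-3)*g" by (simp add: mult.commute)
  have "A*B \<le> (n-3)*g*B" using mult_right_mono[OF A, of B] B by simp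
  hence "dE * g \<le> ((n-3)*B) * g" using dj S by (simp add: algebra_simps)
  hence "dE \<le> (n-3)*B" using g by (simp add: mult_le_cancel_right)
  with fB show False by simp
qed

lemma arith2:
  fixes A B g n x b :: int
  assumes g: "g > 0" and n: "n > 3"
    and big: "A*B - (g*x - b)^2 > (n-3)^2 * g^2"
    and yp: "A*B - (g*n - b)^2 \<le> 0" and ym: "A*B - (g*(-n) - b)^2 \<le> 0"
    and xl: "-n < x" and xu: "x < n"
  shows "-3*g < b \<and> b < 3*g"
proof -
  have sqnn: "(g*x - b)^2 \<ge> 0" by simp
  have AB: "A*B > (n-3)^2 * g^2" using big sqnn by linarith
  have ngx: "g*x < g*n" using mult_strict_left_mono[OF xu g] by simp
  have ngx2: "g*(-n) < g*x" using mult_strict_left_mono[OF xl g] by simp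
  have up: "b < 3*g"
  proof (rule ccontr)
    assume "\<not> b < 3*g"
    hence b3: "b \<ge> 3*g" by simp
    show False
    proof (cases "b \<le> g*n")
      case True
      have "\<bar>g*n - b\<bar> \<le> \<bar>(n-3)*g\<bar>" using True b3 g n by (simp add: algebra_simps)
      hence "(g*n - b)^2 \<le> ((n-3)*g)^2" by (simp add: abs_le_square_iff)
      hence "A*B \<le> (n-3)^2 * g^2" using yp by (simp add: power_mult_distrib)
      with AB show False by simp
    next
      case False
      have "\<bar>g*n - b\<bar> < \<bar>g*x - b\<bar>" using False ngx by simp
      hence "(g*n - b)^2 < (g*x - b)^2" by (simp add: sq_less_iff)
      hence "A*B - (g*x - b)^2 < 0" using yp by simp
      moreover have "(n-3)^2 * g^2 \<ge> 0" by simp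
      ultimately show False using big by simp
    qed
  qed
  have lo: "-3*g < b"
  proof (rule ccontr)
    assume "\<not> -3*g < b"
    hence b3: "b \<le> -3*g" by simp
    show False
    proof (cases "b \<ge> g*(-n)")
      case True
      have "\<bar>g*(-n) - b\<bar> \<le> \<bar>(n-3)*g\<bar>" using True b3 g n by (simp add: algebra_simps)
      hence "(g*(-n) - b)^2 \<le> ((n-3)*g)^2" by (simp add: abs_le_square_iff)
      hence "A*B \<le> (n-3)^2 * g^2" using ym by (simp add: power_mult_distrib)
      with AB show False by simp
    next
      case False
      have "\<bar>g*(-n) - b\<bar> < \<bar>g*x - b\<bar>" using False ngx2 by simp
      hence "(g*(-n) - b)^2 < (g*x - b)^2" by (simp add: sq_less_iff)
      hence "A*B - (g*x - b)^2 < 0" using ym by simp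
      moreover have "(n-3)^2 * g^2 \<ge> 0" by simp
      ultimately show False using big by simp
    qed
  qed
  show ?thesis using up lo by simp
qed

lemma arith3:
  fixes g x b :: int
  assumes g: "g > 0" and b: "-3*g < b" "b < 3*g"
  shows "x \<ge> 7 \<Longrightarrow> (g*(x-4) - b)^2 < (g*x - b)^2"
    and "x \<le> -5 \<Longrightarrow> (g*(x+4) - b)^2 < (g*x - b)^2"
proof -
  assume x: "x \<ge> 7"
  have "g*x \<ge> g*7" using x g by (simp add: mult_left_mono)
  hence p: "g*x - b - 4*g > 0" using g b by linarith
  have e: "g*(x-4) - b = (g*x - b) - 4*g" by (simp add: algebra_simps)
  have "\<bar>g*(x-4) - b\<bar> = g*x - b - 4*g" unfolding e using p by simp
  moreover have "\<bar>g*x - b\<bar> = g*x - b" using p g by simp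
  ultimately have "\<bar>g*(x-4) - b\<bar> < \<bar>g*x - b\<bar>" using g by simp
  thus "(g*(x-4) - b)^2 < (g*x - b)^2" by (simp add: sq_less_iff)
next
  assume x: "x \<le> -5"
  have "g*x \<le> g*(-5)" using mult_left_mono[OF x, of g] g by simp
  hence p: "g*x - b < -2*g" using g b by linarith
  have e: "g*(x+4) - b = (g*x - b) + 4*g" by (simp add: algebra_simps)
  have "\<bar>g*x - b\<bar> = -(g*x - b)" using p g by simp
  moreover have "\<bar>g*(x+4) - b\<bar> < -(g*x - b)" unfolding e using p g by (simp add: abs_less_iff)
  ultimately have "\<bar>g*(x+4) - b\<bar> < \<bar>g*x - b\<bar>" by simp
  thus "(g*(x+4) - b)^2 < (g*x - b)^2" by (simp add: sq_less_iff)
qed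

lemma arith4:
  fixes x n :: int
  assumes "x mod 4 = 3" "-5 < x" "x < 7"
  shows "x = -1 \<or> x = 3"
  using assms by presburger


lemma sum_two:
  assumes a: "a \<in> S" and b: "b \<in> S" and ab: "a \<noteq> b" and fin: "finite S"
    and z: "\<And>i. i \<in> S \<Longrightarrow> i \<noteq> a \<Longrightarrow> i \<noteq> b \<Longrightarrow> f i = 0"
  shows "sum f S = f a + f b"
proof -
  have "sum f S = sum f {a,b}"
    by (rule sum.mono_neutral_right[OF fin], insert a b z, auto)
  thus ?thesis using ab by simp
qed

lemma qf_two:
  fixes C :: "real mat" and \<sigma> :: real
  assumes C: "C \<in> carrier_mat s s" and a: "a < s" and b: "b < s" and ab: "a \<noteq> b"
  shows "vec s (\<lambda>i. if i = a then 1 else if i = b then \<sigma> else 0) \<bullet>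
          (C *\<^sub>v vec s (\<lambda>i. if i = a then 1 else if i = b then \<sigma> else 0))
     = C $$ (a,a) + \<sigma> * C $$ (a,b) + \<sigma> * C $$ (b,a) + \<sigma>^2 * C $$ (b,b)"
  (is "?x \<bullet> (C *\<^sub>v ?x) = _")
proof -
  have x: "?x \<in> carrier_vec s" by simp
  define f where "f = (\<lambda>i j. ?x $ i * C $$ (i,j) * ?x $ j)"
  have "?x \<bullet> (C *\<^sub>v ?x) = (\<Sum>i\<in>{0..<s}. \<Sum>j\<in>{0..<s}. f i j)"
    unfolding f_def by (rule qf_sum[OF C x])
  also have "\<dots> = (\<Sum>i\<in>{0..<s}. f i a + f i b)"
    by (rule sum.cong[OF refl], rule sum_two, insert a b ab, auto simp: f_def)
  also have "\<dots> = (f a a + f a b) + (f b a + f b b)"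
    by (rule sum_two, insert a b ab, auto simp: f_def)
  finally show ?thesis using a b ab by (simp add: f_def power2_eq_square algebra_simps)
qed

lemma pd_entry_bound:
  fixes F :: "int mat"
  assumes F: "F \<in> carrier_mat s s" and pd: "pos_def_real (rmat F)" and a: "a < s" and b: "b < s"
    and ab: "a \<noteq> b" and fa: "F $$ (a,a) = n" and fb: "F $$ (b,b) = n" and fs: "F $$ (a,b) = F $$ (b,a)"
  shows "\<bar>F $$ (a,b)\<bar> < n"
proof -
  have R: "rmat F \<in> carrier_mat s s" using F by simp
  have q: "real_of_int (2*n + 2*\<sigma>*F $$ (a,b)) > 0" if sg: "\<sigma> = 1 \<or> \<sigma> = -1" for \<sigma> :: int
  proof -
    define x where "x = vec s (\<lambda>i. if i = a then 1 else if i = b then real_of_int \<sigma> else 0)"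
    have x: "x \<in> carrier_vec s" unfolding x_def by simp
    have x0: "x \<noteq> 0\<^sub>v s"
    proof
      assume "x = 0\<^sub>v s"
      hence "x $ a = 0" using a by simp
      thus False unfolding x_def using a by simp
    qed
    have "x \<bullet> (rmat F *\<^sub>v x) > 0" by (rule pd_pos[OF pd R x x0])
    moreover have "x \<bullet> (rmat F *\<^sub>v x) = real_of_int (2*n + 2*\<sigma>*F $$ (a,b))"
      unfolding x_def qf_two[OF R a b ab] using F a b fa fb fs sg by (auto simp: power2_eq_square)
    ultimately show ?thesis by simp
  qed
  from q[of 1] q[of "-1"] show ?thesis by (simp add: abs_less_iff)
qed

lemma dj_sym:
  fixes F :: "int mat"
  assumes F: "F \<in> carrier_mat (k+2) (k+2)"
    and sym: "\<And>i j. i < k+2 \<Longrightarrow> j < k+2 \<Longrightarrow> F $$ (i,j) = F $$ (j,i)"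
    and g: "det (lead_sub k F) \<noteq> 0"
  defines "D \<equiv> lead_sub k F"
  defines "u \<equiv> vec k (\<lambda>i. F $$ (i,k))" and "w \<equiv> vec k (\<lambda>i. F $$ (i, Suc k))"
  shows "det F * det D = (det D * F $$ (k,k) - u \<bullet> (adj_mat D *\<^sub>v u))
          * (det D * F $$ (Suc k, Suc k) - w \<bullet> (adj_mat D *\<^sub>v w))
        - (det D * F $$ (k, Suc k) - u \<bullet> (adj_mat D *\<^sub>v w))^2"
proof -
  have ur: "vec k (\<lambda>i. F $$ (k,i)) = u" unfolding u_def by (intro eq_vecI, insert sym, auto)
  have wr: "vec k (\<lambda>i. F $$ (Suc k,i)) = w" unfolding w_def by (intro eq_vecI, insert sym, auto)
  have Dc: "D \<in> carrier_mat k k" unfolding D_def by simp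
  have Ds: "D $$ (i,j) = D $$ (j,i)" if "i < k" "j < k" for i j unfolding D_def using sym that by simp
  have sc: "w \<bullet> (adj_mat D *\<^sub>v u) = u \<bullet> (adj_mat D *\<^sub>v w)"
    by (rule adj_scalar_sym[OF Dc Ds], auto simp: u_def w_def)
  have s2: "F $$ (Suc k, k) = F $$ (k, Suc k)" using sym[of "Suc k" k] by simp
  have "det F * (det D)^2 = det D * ((det D * F $$ (k,k) - u \<bullet> (adj_mat D *\<^sub>v u))
          * (det D * F $$ (Suc k, Suc k) - w \<bullet> (adj_mat D *\<^sub>v w))
        - (det D * F $$ (k, Suc k) - u \<bullet> (adj_mat D *\<^sub>v w))^2)"
    using dj[OF F] unfolding D_def[symmetric] u_def[symmetric] w_def[symmetric] ur wr
    unfolding sc s2 by (simp add: power2_eq_square)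
  hence "det D * (det F * det D) = det D * ((det D * F $$ (k,k) - u \<bullet> (adj_mat D *\<^sub>v u))
          * (det D * F $$ (Suc k, Suc k) - w \<bullet> (adj_mat D *\<^sub>v w))
        - (det D * F $$ (k, Suc k) - u \<bullet> (adj_mat D *\<^sub>v w))^2)"
    by (simp add: power2_eq_square algebra_simps)
  thus ?thesis using g unfolding D_def by simp
qed

locale setting =
  fixes n :: int and r :: nat and M :: "int mat"
  assumes n3: "[n = 3] (mod 4)" and ng: "n > 3" and r1: "1 \<le> r"
    and MC: "M \<in> frakC n r" and tM: "det (tilde M) > 0"
begin

lemma dM: "dim_row M = r" using MC unfolding frakC_def by auto

lemma M_frakE: "M \<in> frakE n M r"
  using MC dM unfolding frakE_def by (auto simp: frakC_def lead_sub_self)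

lemma frakE_r: "G \<in> frakE n M r \<Longrightarrow> G = M"
  using frakE_carrier[of G n M r] lead_sub_self[of G r] dM unfolding frakE_def by auto

lemma base_prop: "(n-3) * det (lead_sub (r-1) M) < det M"
proof -
  obtain k where rk: "r = Suc k" using r1 by (cases r, auto)
  have "det M - det (tilde M) = (n-3) * det (lead_sub k M)"
    by (rule tilde_rel, insert MC rk, simp)
  thus ?thesis using tM rk by simp
qed

lemma claimP:
  assumes "r \<le> s"
  shows "\<forall>G \<in> frakE n M s. \<exists>H \<in> frakE n M s. det G \<le> det H \<and> (n-3) * det (lead_sub (s-1) H) < det H"
  using assms
proof (induction s rule: nat_induct_at_least)
  case base
  show ?case
  proof
    fix G assume "G \<in> frakE n M r"
    hence "G = M" by (rule frakE_r)
    thus "\<exists>H \<in> frakE n M r. det G \<le> det H \<and> (n-3) * det (lead_sub (r-1) H) < det H"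
      using M_frakE base_prop by auto
  qed
next
  case (Suc s)
  obtain k where sk: "s = Suc k" using Suc.hyps r1 by (cases s, auto)
  show ?case
  proof
    fix G assume G: "G \<in> frakE n M (Suc s)"
    have L: "lead_sub s G \<in> frakE n M s" by (rule frakE_lead[OF G], insert dM Suc.hyps, auto)
    obtain H where H: "H \<in> frakE n M s" and HL: "det (lead_sub s G) \<le> det H"
      and Hp: "(n-3) * det (lead_sub (s-1) H) < det H" using Suc.IH L by blast
    show "\<exists>H \<in> frakE n M (Suc s). det G \<le> det H \<and> (n-3) * det (lead_sub (Suc s - 1) H) < det H"
    proof (cases "(n-3) * det (lead_sub s G) < det G")
      case True
      thus ?thesis using G by auto
    next
      case False
      have H': "H \<in> frakE n M (Suc k)" using H sk by simp
      have rk: "dim_row M \<le> Suc k" using dM Suc.hyps sk by simp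
      have Hp': "(n-3) * det (lead_sub k H) < det H" using Hp sk by simp
      note cs = cp_step[OF H' rk n3 ng Hp']
      have "det G \<le> (n-3) * det (lead_sub s G)" using False by simp
      also have "\<dots> \<le> (n-3) * det H" using HL ng by simp
      also have "\<dots> < det (cp n H)" by (rule cs(3))
      finally have "det G < det (cp n H)" .
      moreover have "(n-3) * det (lead_sub (Suc s - 1) (cp n H)) < det (cp n H)"
        using cs(2,3) sk by simp
      moreover have "cp n H \<in> frakE n M (Suc s)" using cs(1) sk by simp
      ultimately show ?thesis by (intro bexI[of _ "cp n H"], simp_all del: diff_Suc_1)
    qed
  qed
qed

lemma free_claim:
  assumes E: "E \<in> frakE n M (Suc t)" and rt: "r \<le> t" and mx: "\<forall>E' \<in> frakE n M (Suc t). det E' \<le> det E"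
  shows "(n-3) * det (lead_sub t E) < det E"
proof -
  obtain k where tk: "t = Suc k" using rt r1 by (cases t, auto)
  have L: "lead_sub t E \<in> frakE n M t" by (rule frakE_lead[OF E], insert dM rt, auto)
  obtain H where H: "H \<in> frakE n M t" and HL: "det (lead_sub t E) \<le> det H"
    and Hp: "(n-3) * det (lead_sub (t-1) H) < det H" using claimP[OF rt] L by blast
  have H': "H \<in> frakE n M (Suc k)" using H tk by simp
  have rk: "dim_row M \<le> Suc k" using dM rt tk by simp
  have Hp': "(n-3) * det (lead_sub k H) < det H" using Hp tk by simp
  note cs = cp_step[OF H' rk n3 ng Hp']
  have "(n-3) * det (lead_sub t E) \<le> (n-3) * det H" using HL ng by simp
  also have "\<dots> < det (cp n H)" by (rule cs(3))
  also have "\<dots> \<le> det E" using mx cs(1) tk by simp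
  finally show ?thesis .
qed

lemma pair_last:
  assumes E: "E \<in> frakE n M (Suc (Suc k))" and rk: "r \<le> k"
    and mx: "\<forall>E' \<in> frakE n M (Suc (Suc k)). det E' \<le> det E"
  shows "E $$ (k, Suc k) \<in> {-1, 3}"
proof -
  have C: "E \<in> carrier_mat (Suc (Suc k)) (Suc (Suc k))" by (rule frakE_carrier[OF E])
  have sym: "E $$ (i,j) = E $$ (j,i)" if "i < Suc (Suc k)" "j < Suc (Suc k)" for i j
    by (rule frakE_sym[OF E that])
  have dg: "E $$ (i,i) = n" if "i < Suc (Suc k)" for i by (rule frakE_diag[OF E that])
  define D where "D = lead_sub k E"
  define g where "g = det D"
  define Ad where "Ad = adj_mat D"
  define u where "u = vec k (\<lambda>i. E $$ (i,k))"
  define w where "w = vec k (\<lambda>i. E $$ (i, Suc k))"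
  define x where "x = E $$ (k, Suc k)"
  define \<beta> where "\<beta> = u \<bullet> (Ad *\<^sub>v w)"
  have Dc: "D \<in> carrier_mat k k" unfolding D_def by simp
  have uc: "u \<in> carrier_vec k" unfolding u_def by simp
  have wc: "w \<in> carrier_vec k" unfolding w_def by simp
  have Dk: "D \<in> frakE n M k" unfolding D_def by (rule frakE_lead[OF E], insert dM rk, auto)
  have gpos: "g > 0" unfolding g_def by (rule frakE_det_pos[OF Dk])
  define E1 where "E1 = lead_sub (Suc k) E"
  have E1: "E1 \<in> frakE n M (Suc k)" unfolding E1_def by (rule frakE_lead[OF E], insert dM rk, auto)
  have E1D: "lead_sub k E1 = D" unfolding E1_def D_def by (rule lead_sub_lead_sub, simp)
  have E1B: "E1 = bord D u n"
  proof -
    have "E1 = bord (lead_sub k E1) (vec k (\<lambda>i. E1 $$ (i,k))) (E1 $$ (k,k))"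
      by (rule bord_lead_sub[OF frakE_carrier[OF E1] frakE_sym[OF E1]])
    moreover have "vec k (\<lambda>i. E1 $$ (i,k)) = u" unfolding E1_def u_def by (intro eq_vecI, auto)
    moreover have "E1 $$ (k,k) = n" by (rule frakE_diag[OF E1], simp)
    ultimately show ?thesis using E1D by simp
  qed
  define A where "A = det E1"
  have Aeq: "A = g * n - u \<bullet> (Ad *\<^sub>v u)"
    unfolding A_def E1B g_def Ad_def using bord_det[OF Dc uc, of n] gpos unfolding g_def by simp
  define \<tau> where "\<tau> = Transposition.transpose k (Suc k)"
  have \<tau>p: "\<tau> permutes {0..<Suc (Suc k)}" unfolding \<tau>_def by (rule permutes_swap_id, auto)
  have \<tau>fix: "\<forall>i<dim_row M. \<tau> i = i" using dM rk unfolding \<tau>_def by auto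
  have \<tau>lt: "\<tau> i = i" if "i < k" for i using that unfolding \<tau>_def by auto
  have \<tau>k: "\<tau> k = Suc k" "\<tau> (Suc k) = k" unfolding \<tau>_def by auto
  define E' where "E' = permE \<tau> E"
  have E': "E' \<in> frakE n M (Suc (Suc k))" unfolding E'_def
    by (rule permE_frakE[OF E \<tau>p \<tau>fix], insert dM rk, auto)
  have dE': "det E' = det E" unfolding E'_def by (rule permE_det[OF C \<tau>p])
  have mx': "\<forall>E'' \<in> frakE n M (Suc (Suc k)). det E'' \<le> det E'" using mx dE' by simp
  have E'idx: "E' $$ (i,j) = E $$ (\<tau> i, \<tau> j)" if "i < Suc (Suc k)" "j < Suc (Suc k)" for i j
    using C that unfolding E'_def permE_def by simp
  define E2 where "E2 = lead_sub (Suc k) E'"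
  have E2: "E2 \<in> frakE n M (Suc k)" unfolding E2_def by (rule frakE_lead[OF E'], insert dM rk, auto)
  have E2D: "lead_sub k E2 = D"
    unfolding E2_def D_def by (rule eq_matI, insert E'idx \<tau>lt, auto)
  have E2B: "E2 = bord D w n"
  proof -
    have "E2 = bord (lead_sub k E2) (vec k (\<lambda>i. E2 $$ (i,k))) (E2 $$ (k,k))"
      by (rule bord_lead_sub[OF frakE_carrier[OF E2] frakE_sym[OF E2]])
    moreover have "vec k (\<lambda>i. E2 $$ (i,k)) = w" unfolding E2_def w_def
      by (intro eq_vecI, insert E'idx \<tau>lt \<tau>k, auto)
    moreover have "E2 $$ (k,k) = n" by (rule frakE_diag[OF E2], simp)
    ultimately show ?thesis using E2D by simp
  qed
  define B where "B = det E2"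
  have Beq: "B = g * n - w \<bullet> (Ad *\<^sub>v w)"
    unfolding B_def E2B g_def Ad_def using bord_det[OF Dc wc, of n] gpos unfolding g_def by simp
  have Bpos: "B > 0" unfolding B_def by (rule frakE_det_pos[OF E2])
  have fA: "(n-3) * A < det E" unfolding A_def E1_def by (rule free_claim[OF E _ mx], insert rk, simp)
  have fB: "(n-3) * B < det E" unfolding B_def E2_def using free_claim[OF E' _ mx'] rk dE' by simp
  have DJ: "det F * g = A * B - (g * y - \<beta>)^2"
    if F: "F \<in> carrier_mat (Suc (Suc k)) (Suc (Suc k))"
      and Fs: "\<And>i j. i < Suc (Suc k) \<Longrightarrow> j < Suc (Suc k) \<Longrightarrow> F $$ (i,j) = F $$ (j,i)"
      and FD: "lead_sub k F = D" and Fu: "vec k (\<lambda>i. F $$ (i,k)) = u"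
      and Fw: "vec k (\<lambda>i. F $$ (i,Suc k)) = w" and Fk: "F $$ (k,k) = n"
      and Fk2: "F $$ (Suc k, Suc k) = n" and Fy: "F $$ (k, Suc k) = y" for F y
  proof -
    have F': "F \<in> carrier_mat (k+2) (k+2)" using F by simp
    have Fs': "F $$ (i,j) = F $$ (j,i)" if "i < k+2" "j < k+2" for i j using Fs that by simp
    have g': "det (lead_sub k F) \<noteq> 0" using FD gpos unfolding g_def by simp
    show ?thesis using dj_sym[OF F' Fs' g'] unfolding FD Fu Fw Fk Fk2 Fy
      unfolding Aeq Beq \<beta>_def g_def Ad_def by simp
  qed
  have dE: "det E * g = A * B - (g * x - \<beta>)^2"
    by (rule DJ[OF C sym], insert dg, auto simp: D_def u_def w_def x_def)
  define Ey where "Ey y = setpair E k (Suc k) y" for y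
  have EyC: "Ey y \<in> carrier_mat (Suc (Suc k)) (Suc (Suc k))" for y
    unfolding Ey_def setpair_def using C by auto
  have Eyi: "Ey y $$ (i,j) = (if (i = k \<and> j = Suc k) \<or> (i = Suc k \<and> j = k) then y else E $$ (i,j))"
    if "i < Suc (Suc k)" "j < Suc (Suc k)" for i j y
    unfolding Ey_def setpair_def using C that by auto
  have Eys: "Ey y $$ (i,j) = Ey y $$ (j,i)" if "i < Suc (Suc k)" "j < Suc (Suc k)" for i j y
    using Eyi[OF that] Eyi[OF that(2,1)] sym[OF that] by auto
  have EyL: "lead_sub (Suc k) (Ey y) = E1" for y
    unfolding E1_def by (rule eq_matI, insert Eyi, auto)
  have DJy: "det (Ey y) * g = A * B - (g * y - \<beta>)^2" for y
  proof (rule DJ[OF EyC])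
    show "lead_sub k (Ey y) = D" unfolding D_def by (rule eq_matI, insert Eyi, auto)
    show "vec k (\<lambda>i. Ey y $$ (i,k)) = u" unfolding u_def by (intro eq_vecI, insert Eyi, auto)
    show "vec k (\<lambda>i. Ey y $$ (i,Suc k)) = w" unfolding w_def by (intro eq_vecI, insert Eyi, auto)
    show "Ey y $$ (k,k) = n" using Eyi dg by auto
    show "Ey y $$ (Suc k, Suc k) = n" using Eyi dg by auto
    show "Ey y $$ (k, Suc k) = y" using Eyi by auto
  qed (rule Eys)
  have Eypd: "pos_def_real (rmat (Ey y))" if pos: "det (Ey y) > 0" for y
  proof -
    have EB: "Ey y = bord E1 (vec (Suc k) (\<lambda>i. Ey y $$ (i, Suc k))) (Ey y $$ (Suc k, Suc k))"
      using bord_lead_sub[OF EyC Eys] EyL by simp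
    show ?thesis
      by (subst EB, rule pd_bord_int[OF frakE_carrier[OF E1] frakE_T[OF E1] frakE_pd[OF E1]],
          simp, insert pos EB, simp)
  qed
  have Eymem: "Ey y \<in> frakE n M (Suc (Suc k))" if pos: "det (Ey y) > 0" and yc: "[y = n] (mod 4)" for y
    unfolding Ey_def by (rule setpair_frakE[OF E _ _ _ _ yc], insert dM rk Eypd[OF pos], auto simp: Ey_def)
  have yn: "A * B - (g * y - \<beta>)^2 \<le> 0" if yy: "y = n \<or> y = -n" for y
  proof (rule ccontr)
    assume "\<not> ?thesis"
    hence "det (Ey y) * g > 0" using DJy[of y] by simp
    hence pos: "det (Ey y) > 0" using gpos by (simp add: zero_less_mult_iff)
    have "\<bar>Ey y $$ (k, Suc k)\<bar> < n"
      by (rule pd_entry_bound[OF EyC Eypd[OF pos]], insert Eyi dg, auto)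
    thus False using Eyi yy ng by auto
  qed
  have noimp: "\<not> (A * B - (g * y - \<beta>)^2 > A * B - (g * x - \<beta>)^2)" if yc: "[y = n] (mod 4)" for y
  proof
    assume "A * B - (g * y - \<beta>)^2 > A * B - (g * x - \<beta>)^2"
    hence "det (Ey y) * g > det E * g" using DJy[of y] dE by simp
    hence gt: "det (Ey y) > det E" using gpos by simp
    hence "det (Ey y) > 0" using frakE_det_pos[OF E] by simp
    hence "Ey y \<in> frakE n M (Suc (Suc k))" by (rule Eymem[OF _ yc])
    with mx gt show False by auto
  qed
  have cpA: "(n-3) * (2*A - (n-3)*g) \<le> det E"
  proof -
    have "det (cp n E1) = (n-3) * (2 * det E1 - (n-3) * det (lead_sub k E1))"
      by (rule cp_det[OF frakE_carrier[OF E1] frakE_sym[OF E1] frakE_diag[OF E1]],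
          insert frakE_det_pos[OF E1], auto)
    hence eq: "det (cp n E1) = (n-3) * (2*A - (n-3)*g)" unfolding A_def E1D g_def .
    show ?thesis
    proof (cases "det (cp n E1) > 0")
      case True
      have "cp n E1 \<in> frakE n M (Suc (Suc k))" by (rule cp_frakE(1)[OF E1 _ n3 True], insert dM rk, simp)
      with mx eq show ?thesis by auto
    next
      case False
      thus ?thesis using eq frakE_det_pos[OF E] by simp
    qed
  qed
  have xb: "\<bar>x\<bar> < n" unfolding x_def
    by (rule pd_entry_bound[OF C frakE_pd[OF E]], insert dg sym, auto)
  have a1: "det E > (n-3)^2 * g" by (rule arith1[OF gpos _ Bpos fB cpA dE], insert ng, auto)
  have big: "A * B - (g * x - \<beta>)^2 > (n-3)^2 * g^2"
  proof -
    have "det E * g > (n-3)^2 * g * g" using a1 gpos by simp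
    thus ?thesis unfolding dE by (simp add: power2_eq_square algebra_simps)
  qed
  have bb: "-3*g < \<beta> \<and> \<beta> < 3*g"
    by (rule arith2[OF gpos ng big yn yn], insert xb, auto)
  have xc: "[x = n] (mod 4)" using E C unfolding frakE_iff x_def by auto
  have x7: "\<not> x \<ge> 7"
  proof
    assume "x \<ge> 7"
    hence "(g*(x-4) - \<beta>)^2 < (g*x - \<beta>)^2" using arith3(1)[OF gpos] bb by blast
    moreover have "[x - 4 = n] (mod 4)" using xc by (simp add: cong_def)
    ultimately show False using noimp[of "x-4"] by simp
  qed
  have x5: "\<not> x \<le> -5"
  proof
    assume "x \<le> -5"
    hence "(g*(x+4) - \<beta>)^2 < (g*x - \<beta>)^2" using arith3(2)[OF gpos] bb by blast
    moreover have "[x + 4 = n] (mod 4)" using xc by (simp add: cong_def)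
    ultimately show False using noimp[of "x+4"] by simp
  qed
  have "x mod 4 = 3" using xc n3 by (simp add: cong_def)
  hence "x = -1 \<or> x = 3" using x7 x5 arith4 by simp
  thus ?thesis unfolding x_def by auto
qed

end

theorem theorem8:
  fixes n :: int and r m :: nat and M Estar :: "int mat"
  assumes "[n = 3] (mod 4)" and "n > 3"
    and "1 \<le> r" and "r \<le> m"
    and "M \<in> frakC n r"
    and "det (tilde M) > 0"
    and "Estar \<in> frakE n M m"
    and "\<forall>E \<in> frakE n M m. det E \<le> det Estar"
  shows "\<forall>i j. r \<le> i \<and> i < m \<and> r \<le> j \<and> j < m \<and> i \<noteq> j
           \<longrightarrow> Estar $$ (i,j) \<in> {-1, 3}"
proof (intro allI impI)
  fix i j assume ij: "r \<le> i \<and> i < m \<and> r \<le> j \<and> j < m \<and> i \<noteq> j"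
  interpret setting n r M using assms by unfold_locales auto
  have mx: "\<forall>E \<in> frakE n M m. det E \<le> det Estar" by fact
  have ES: "Estar \<in> frakE n M m" by fact
  obtain k where mk: "m = Suc (Suc k)" and rk: "r \<le> k"
  proof -
    have "m \<ge> r + 2" using ij by auto
    thus ?thesis using that[of "m - 2"] by auto
  qed
  have C: "Estar \<in> carrier_mat m m" by (rule frakE_carrier[OF ES])
  define \<tau>a where "\<tau>a = Transposition.transpose j (Suc k)"
  have \<tau>ap: "\<tau>a permutes {0..<m}" unfolding \<tau>a_def by (rule permutes_swap_id, insert ij mk, auto)
  have \<tau>afix: "\<forall>a<dim_row M. \<tau>a a = a" using dM ij rk unfolding \<tau>a_def by auto
  define E1 where "E1 = permE \<tau>a Estar"
  have E1: "E1 \<in> frakE n M m" unfolding E1_def by (rule permE_frakE[OF ES \<tau>ap \<tau>afix], insert dM ij, auto)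
  have dE1: "det E1 = det Estar" unfolding E1_def by (rule permE_det[OF C \<tau>ap])
  have E1C: "E1 \<in> carrier_mat m m" by (rule frakE_carrier[OF E1])
  define i' where "i' = \<tau>a i"
  have i'r: "r \<le> i'" and i'm: "i' < m" and i'k: "i' \<noteq> Suc k"
    using ij mk rk unfolding i'_def \<tau>a_def by (auto simp: transpose_def)
  define \<tau>b where "\<tau>b = Transposition.transpose k i'"
  have \<tau>bp: "\<tau>b permutes {0..<m}" unfolding \<tau>b_def by (rule permutes_swap_id, insert i'm mk, auto)
  have \<tau>bfix: "\<forall>a<dim_row M. \<tau>b a = a" using dM i'r rk unfolding \<tau>b_def by auto
  define E2 where "E2 = permE \<tau>b E1"
  have E2: "E2 \<in> frakE n M m" unfolding E2_def by (rule permE_frakE[OF E1 \<tau>bp \<tau>bfix], insert dM ij, auto)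
  have dE2: "det E2 = det Estar" unfolding E2_def using permE_det[OF E1C \<tau>bp] dE1 by simp
  have E2': "E2 \<in> frakE n M (Suc (Suc k))" using E2 mk by simp
  have mx2: "\<forall>E \<in> frakE n M (Suc (Suc k)). det E \<le> det E2" using mx dE2 mk by simp
  have "E2 $$ (k, Suc k) \<in> {-1, 3}" by (rule pair_last[OF E2' rk mx2])
  moreover have "E2 $$ (k, Suc k) = Estar $$ (i,j)"
  proof -
    have "E2 $$ (k, Suc k) = E1 $$ (\<tau>b k, \<tau>b (Suc k))"
      unfolding E2_def permE_def using E1C mk by simp
    also have "\<tau>b k = i'" unfolding \<tau>b_def by simp
    also have "\<tau>b (Suc k) = Suc k" unfolding \<tau>b_def using i'k by (auto simp: transpose_def)
    also have "E1 $$ (i', Suc k) = Estar $$ (\<tau>a i', \<tau>a (Suc k))"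
      unfolding E1_def permE_def using C mk i'm by simp
    also have "\<tau>a i' = i" unfolding i'_def \<tau>a_def by (auto simp: transpose_def)
    also have "\<tau>a (Suc k) = j" unfolding \<tau>a_def by simp
    finally show ?thesis .
  qed
  ultimately show "Estar $$ (i,j) \<in> {-1, 3}" by simp
qed


end
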